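(* Let $k$ be a field and $\mathsf{E}$ a locally finite $k$-linear category. Then the contravariant functor $\mathcal{N}\mapsto\mathcal{N}^*=\operatorname{Hom}_k(\mathcal{N},k)$ from the category of locally finite right $\mathcal{C}_\mathsf{E}$-comodules to the category of locally finite left $\mathcal{C}_\mathsf{E}$-contramodules is fully faithful; i.e., for locally finite right $\mathcal{C}_\mathsf{E}$-comodules $\mathcal{M},\mathcal{N}$, the map $f\mapsto f^*$ is a bijection from comodule morphisms $\mathcal{M}\to\mathcal{N}$ to contramodule morphisms $\mathcal{N}^*\to\mathcal{M}^*$.
   Context: A small $k$-linear category $\mathsf{E}$ has finite-or-not $k$-vector spaces $\operatorname{Hom}_\mathsf{E}(x,y)$, $k$-bilinear associative composition and identities with $\mathrm{id}_x\ne0$. Write $x\preceq y$ if there are $n\ge1$ and objects $x=z_0,\dots,z_n=y$ with $\operatorname{Hom}_\mathsf{E}(z_{i-1},z_i)\neq0$ for all $i$. $\mathsf{E}$ is locally finite if all $\operatorname{Hom}_\mathsf{E}(x,y)$ are finite-dimensional and every $\{z:x\preceq z\preceq y\}$ is finite. $\mathcal{C}_\mathsf{E}=\bigoplus_{x,y}\mathcal{C}^{x,y}$, $\mathcal{C}^{x,y}=\operatorname{Hom}_\mathsf{E}(x,y)^*$; counit zero on $\mathcal{C}^{x,y}$ for $x\ne y$, evaluation at $\mathrm{id}_x$ on $\mathcal{C}^{x,x}$; comultiplication $\mathcal{C}^{x,y}\to\bigoplus_z\mathcal{C}^{x,z}\otimes\mathcal{C}^{z,y}$ dual to composition $g\otimes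 h\mapsto hg$. Let $e_x\in\mathcal{C}_\mathsf{E}^*$ be evaluation at $\mathrm{id}_x$ on $\mathcal{C}^{x,x}$ and zero elsewhere. A right comodule is $(\mathcal{N},\nu:\mathcal{N}\to\mathcal{N}\otimes_k\mathcal{C}_\mathsf{E})$ coassociative and counital; for $\varphi\in\mathcal{C}_\mathsf{E}^*$ put $\varphi\cdot n=(\mathrm{id}\otimes\varphi)\nu(n)$. One has $\mathcal{N}=\bigoplus_xe_x\cdot\mathcal{N}$; $\mathcal{N}$ is locally finite if each $e_x\cdot\mathcal{N}$ is finite-dimensional. A left contramodule over a coalgebra $(\mathcal{C},\mu,\epsilon)$ is a space $\mathfrak{P}$ with $\pi:\operatorname{Hom}_k(\mathcal{C},\mathfrak{P})\to\mathfrak{P}$ such that $\pi(c\mapsto\epsilon(c)p)=p$ and, under $\operatorname{Hom}_k(\mathcal{C},\operatorname{Hom}_k(\mathcal{C},\mathfrak{P}))\cong\operatorname{Hom}_k(\mathcal{C}\otimes\mathcal{C},\mathfrak{P})$, $f\mapsto(c'\otimes c''\mapsto f(c'')(c'))$, $\pi(c\mapsto\pi(f(c)))=\pi(f\circ\mu)$; morphisms commute with $\pi$. For $\varphi\in\mathcal{C}^*$ set $\varphi\cdot p=\pi(c\mapsto\varphi(c)p)$. For a left $\mathcal{C}_\mathsf{E}$-contramodule, $\mathfrak{P}\cong\prod_xe_x\cdot\mathfrak{P}$, and $\mathfrak{P}$ is locally finite if each $e_x\cdot\mathfrak{P}$ is finite-dimensional. For a right comodule $\mathcal{N}$, $\mathcal{N}^*$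 is a left contramodule with $\pi(g)(n)=\sum_ig(c_i)(n_i)$ where $\nu(n)=\sum_in_i\otimes c_i$. *)

theory Defs
  imports Main "HOL-Library.Function_Algebras"
begin

definition vs_axioms :: "('k::field \<Rightarrow> 'v::ab_group_add \<Rightarrow> 'v) \<Rightarrow> bool" where
  "vs_axioms s \<longleftrightarrow> (\<forall>a x y. s a (x + y) = s a x + s a y) \<and> (\<forall>a b x. s (a + b) x = s a x + s b x)
     \<and> (\<forall>a b x. s a (s b x) = s (a * b) x) \<and> (\<forall>x. s 1 x = x)"

definition is_space :: "('k::field \<Rightarrow> 'v::ab_group_add \<Rightarrow> 'v) \<Rightarrow> 'v set \<Rightarrow> bool" where
  "is_space s V \<longleftrightarrow> vs_axioms s \<and> 0 \<in> V \<and> (\<forall>x\<in>V. \<forall>y\<in>V. x + y \<in> V) \<and> (\<forall>a. \<forall>x\<in>V. s a x \<in> V)"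

definition linear_on :: "('k::field \<Rightarrow> 'v::ab_group_add \<Rightarrow> 'v) \<Rightarrow> 'v set
    \<Rightarrow> ('k \<Rightarrow> 'w::ab_group_add \<Rightarrow> 'w) \<Rightarrow> 'w set \<Rightarrow> ('v \<Rightarrow> 'w) \<Rightarrow> bool" where
  "linear_on s1 V s2 W f \<longleftrightarrow> (\<forall>x\<in>V. f x \<in> W) \<and> (\<forall>x\<in>V. \<forall>y\<in>V. f (x + y) = f x + f y)
     \<and> (\<forall>a. \<forall>x\<in>V. f (s1 a x) = s2 a (f x))"

definition lin_maps :: "('k::field \<Rightarrow> 'v::ab_group_add \<Rightarrow> 'v) \<Rightarrow> 'v set
    \<Rightarrow> ('k \<Rightarrow> 'w::ab_group_add \<Rightarrow> 'w) \<Rightarrow> 'w set \<Rightarrow> ('v \<Rightarrow> 'w) set" where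
  "lin_maps s1 V s2 W = {f. linear_on s1 V s2 W f \<and> (\<forall>x. x \<notin> V \<longrightarrow> f x = 0)}"

definition fscale :: "('k \<Rightarrow> 'w \<Rightarrow> 'w) \<Rightarrow> 'k \<Rightarrow> ('v \<Rightarrow> 'w) \<Rightarrow> 'v \<Rightarrow> 'w" where
  "fscale s a f = (\<lambda>x. s a (f x))"

definition lin_span :: "('k::field \<Rightarrow> 'v::ab_group_add \<Rightarrow> 'v) \<Rightarrow> 'v set \<Rightarrow> 'v set" where
  "lin_span s B = {v. \<exists>a. v = (\<Sum>b\<in>B. s (a b) b)}"

definition fin_dim :: "('k::field \<Rightarrow> 'v::ab_group_add \<Rightarrow> 'v) \<Rightarrow> 'v set \<Rightarrow> bool" where
  "fin_dim s V \<longleftrightarrow> (\<exists>B. finite B \<and> B \<subseteq> V \<and> V = lin_span s B)"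

definition dual :: "('k::field \<Rightarrow> 'v::ab_group_add \<Rightarrow> 'v) \<Rightarrow> 'v set \<Rightarrow> ('v \<Rightarrow> 'k) set" where
  "dual s V = lin_maps s V (*) UNIV"

section \<open>Tensor products: formal sums modulo the multilinearity relations\<close>

definition delta :: "'a \<Rightarrow> 'a \<Rightarrow> 'k::field" where
  "delta p = (\<lambda>q. if q = p then 1 else 0)"

definition free :: "'a list \<Rightarrow> 'a \<Rightarrow> 'k::field" where
  "free xs = (\<lambda>q. of_nat (count_list xs q))"

definition fspan :: "('a \<Rightarrow> 'k::field) set \<Rightarrow> ('a \<Rightarrow> 'k) set" where
  "fspan G = {d. \<exists>F a. finite F \<and> F \<subseteq> G \<and> d = (\<lambda>q. \<Sum>g\<in>F. a g * g q)}"

definition rel2 :: "('k::field \<Rightarrow> 'v::ab_group_add \<Rightarrow> 'v) \<Rightarrow> 'v set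
    \<Rightarrow> ('k \<Rightarrow> 'w::ab_group_add \<Rightarrow> 'w) \<Rightarrow> 'w set \<Rightarrow> ('v \<times> 'w \<Rightarrow> 'k) set" where
  "rel2 sV V sW W =
     {delta (x + x', y) - delta (x, y) - delta (x', y) | x x' y. x \<in> V \<and> x' \<in> V \<and> y \<in> W} \<union>
     {delta (x, y + y') - delta (x, y) - delta (x, y') | x y y'. x \<in> V \<and> y \<in> W \<and> y' \<in> W} \<union>
     {delta (sV a x, y) - (\<lambda>q. a * delta (x, y) q) | a x y. x \<in> V \<and> y \<in> W} \<union>
     {delta (x, sW a y) - (\<lambda>q. a * delta (x, y) q) | a x y. x \<in> V \<and> y \<in> W}"

text \<open>Equality of two formal sums (lists of pure tensors) in V \<otimes> W.\<close>
definition teq2 :: "('k::field \<Rightarrow> 'v::ab_group_add \<Rightarrow> 'v) \<Rightarrow> 'v set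
    \<Rightarrow> ('k \<Rightarrow> 'w::ab_group_add \<Rightarrow> 'w) \<Rightarrow> 'w set \<Rightarrow> ('v \<times> 'w) list \<Rightarrow> ('v \<times> 'w) list \<Rightarrow> bool" where
  "teq2 sV V sW W xs ys \<longleftrightarrow> set xs \<subseteq> V \<times> W \<and> set ys \<subseteq> V \<times> W \<and>
     (free xs - free ys :: 'v \<times> 'w \<Rightarrow> 'k) \<in> fspan (rel2 sV V sW W)"

definition rel3 :: "('k::field \<Rightarrow> 'u::ab_group_add \<Rightarrow> 'u) \<Rightarrow> 'u set
    \<Rightarrow> ('k \<Rightarrow> 'v::ab_group_add \<Rightarrow> 'v) \<Rightarrow> 'v set
    \<Rightarrow> ('k \<Rightarrow> 'w::ab_group_add \<Rightarrow> 'w) \<Rightarrow> 'w set \<Rightarrow> ('u \<times> 'v \<times> 'w \<Rightarrow> 'k) set" where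
  "rel3 sU U sV V sW W =
     {delta (x + x', y, z) - delta (x, y, z) - delta (x', y, z) | x x' y z. x \<in> U \<and> x' \<in> U \<and> y \<in> V \<and> z \<in> W} \<union>
     {delta (x, y + y', z) - delta (x, y, z) - delta (x, y', z) | x y y' z. x \<in> U \<and> y \<in> V \<and> y' \<in> V \<and> z \<in> W} \<union>
     {delta (x, y, z + z') - delta (x, y, z) - delta (x, y, z') | x y z z'. x \<in> U \<and> y \<in> V \<and> z \<in> W \<and> z' \<in> W} \<union>
     {delta (sU a x, y, z) - (\<lambda>q. a * delta (x, y, z) q) | a x y z. x \<in> U \<and> y \<in> V \<and> z \<in> W} \<union>
     {delta (x, sV a y, z) - (\<lambda>q. a * delta (x, y, z) q) | a x y z. x \<in> U \<and> y \<in> V \<and> z \<in> W} \<union>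
     {delta (x, y, sW a z) - (\<lambda>q. a * delta (x, y, z) q) | a x y z. x \<in> U \<and> y \<in> V \<and> z \<in> W}"

definition teq3 :: "('k::field \<Rightarrow> 'u::ab_group_add \<Rightarrow> 'u) \<Rightarrow> 'u set
    \<Rightarrow> ('k \<Rightarrow> 'v::ab_group_add \<Rightarrow> 'v) \<Rightarrow> 'v set
    \<Rightarrow> ('k \<Rightarrow> 'w::ab_group_add \<Rightarrow> 'w) \<Rightarrow> 'w set
    \<Rightarrow> ('u \<times> 'v \<times> 'w) list \<Rightarrow> ('u \<times> 'v \<times> 'w) list \<Rightarrow> bool" where
  "teq3 sU U sV V sW W xs ys \<longleftrightarrow> set xs \<subseteq> U \<times> V \<times> W \<and> set ys \<subseteq> U \<times> V \<times> W \<and>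
     (free xs - free ys :: 'u \<times> 'v \<times> 'w \<Rightarrow> 'k) \<in> fspan (rel3 sU U sV V sW W)"

text \<open>Objects: the type 'o.  Hom x y: a subspace of the type 'h.
  cmp x z y g h = h \<circ> g for g : x \<rightarrow> z, h : z \<rightarrow> y.  idm x = identity of x.\<close>
definition klin_cat :: "('k::field \<Rightarrow> 'h::ab_group_add \<Rightarrow> 'h) \<Rightarrow> ('o \<Rightarrow> 'o \<Rightarrow> 'h set)
    \<Rightarrow> ('o \<Rightarrow> 'o \<Rightarrow> 'o \<Rightarrow> 'h \<Rightarrow> 'h \<Rightarrow> 'h) \<Rightarrow> ('o \<Rightarrow> 'h) \<Rightarrow> bool" where
  "klin_cat s Hom cmp idm \<longleftrightarrow>
     (\<forall>x y. is_space s (Hom x y)) \<and>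
     (\<forall>x z y g h. g \<in> Hom x z \<longrightarrow> h \<in> Hom z y \<longrightarrow> cmp x z y g h \<in> Hom x y) \<and>
     (\<forall>x z y g g' h. g \<in> Hom x z \<longrightarrow> g' \<in> Hom x z \<longrightarrow> h \<in> Hom z y \<longrightarrow>
        cmp x z y (g + g') h = cmp x z y g h + cmp x z y g' h) \<and>
     (\<forall>x z y g h h'. g \<in> Hom x z \<longrightarrow> h \<in> Hom z y \<longrightarrow> h' \<in> Hom z y \<longrightarrow>
        cmp x z y g (h + h') = cmp x z y g h + cmp x z y g h') \<and>
     (\<forall>x z y a g h. g \<in> Hom x z \<longrightarrow> h \<in> Hom z y \<longrightarrow>
        cmp x z y (s a g) h = s a (cmp x z y g h) \<and> cmp x z y g (s a h) = s a (cmp x z y g h)) \<and>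
     (\<forall>w x y z f g h. f \<in> Hom w x \<longrightarrow> g \<in> Hom x y \<longrightarrow> h \<in> Hom y z \<longrightarrow>
        cmp w y z (cmp w x y f g) h = cmp w x z f (cmp x y z g h)) \<and>
     (\<forall>x. idm x \<in> Hom x x \<and> idm x \<noteq> 0) \<and>
     (\<forall>x y h. h \<in> Hom x y \<longrightarrow> cmp x x y (idm x) h = h \<and> cmp x y y h (idm y) = h)"

definition preceq :: "('o \<Rightarrow> 'o \<Rightarrow> 'h::zero set) \<Rightarrow> 'o \<Rightarrow> 'o \<Rightarrow> bool" where
  "preceq Hom = (\<lambda>x y. Hom x y \<noteq> {0})\<^sup>+\<^sup>+"

definition loc_fin_cat :: "('k::field \<Rightarrow> 'h::ab_group_add \<Rightarrow> 'h) \<Rightarrow> ('o \<Rightarrow> 'o \<Rightarrow> 'h set) \<Rightarrow> bool" where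
  "loc_fin_cat s Hom \<longleftrightarrow> (\<forall>x y. fin_dim s (Hom x y)) \<and>
     (\<forall>x y. finite {z. preceq Hom x z \<and> preceq Hom z y})"

text \<open>An element c of C_E = \<Oplus>_{x,y} Hom(x,y)^* is a family c x y \<in> Hom(x,y)^*,
  nonzero for only finitely many (x,y).\<close>
definition CE :: "('k::field \<Rightarrow> 'h::ab_group_add \<Rightarrow> 'h) \<Rightarrow> ('o \<Rightarrow> 'o \<Rightarrow> 'h set)
    \<Rightarrow> ('o \<Rightarrow> 'o \<Rightarrow> 'h \<Rightarrow> 'k) set" where
  "CE s Hom = {c. (\<forall>x y. c x y \<in> dual s (Hom x y)) \<and> finite {(x, y). c x y \<noteq> 0}}"

definition cscale :: "'k::field \<Rightarrow> ('o \<Rightarrow> 'o \<Rightarrow> 'h \<Rightarrow> 'k) \<Rightarrow> 'o \<Rightarrow> 'o \<Rightarrow> 'h \<Rightarrow> 'k" where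
  "cscale a c = (\<lambda>x y h. a * c x y h)"

definition counit :: "('o \<Rightarrow> 'h) \<Rightarrow> ('o \<Rightarrow> 'o \<Rightarrow> 'h \<Rightarrow> 'k::field) \<Rightarrow> 'k" where
  "counit idm c = (\<Sum>x\<in>{x. c x x \<noteq> 0}. c x x (idm x))"

definition ev_id :: "('o \<Rightarrow> 'h) \<Rightarrow> 'o \<Rightarrow> ('o \<Rightarrow> 'o \<Rightarrow> 'h \<Rightarrow> 'k::field) \<Rightarrow> 'k" where
  "ev_id idm x c = c x x (idm x)"

text \<open>A formal sum xs of pure tensors c' \<otimes> c'' represents the comultiplication of c iff it
  is dual to composition: its pairing with g \<otimes> h (g \<in> Hom(x,z), h \<in> Hom(w,y)) is c(hg)
  when z = w (i.e. the value of c on the composite), and 0 when z \<noteq> w (no components outside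
  \<Oplus>_z C^{x,z} \<otimes> C^{z,y}).\<close>
definition comult_rep :: "('o \<Rightarrow> 'o \<Rightarrow> 'h set) \<Rightarrow> ('o \<Rightarrow> 'o \<Rightarrow> 'o \<Rightarrow> 'h \<Rightarrow> 'h \<Rightarrow> 'h)
    \<Rightarrow> ('o \<Rightarrow> 'o \<Rightarrow> 'h \<Rightarrow> 'k::field)
    \<Rightarrow> (('o \<Rightarrow> 'o \<Rightarrow> 'h \<Rightarrow> 'k) \<times> ('o \<Rightarrow> 'o \<Rightarrow> 'h \<Rightarrow> 'k)) list \<Rightarrow> bool" where
  "comult_rep Hom cmp c xs \<longleftrightarrow>
     (\<forall>x z w y g h. g \<in> Hom x z \<longrightarrow> h \<in> Hom w y \<longrightarrow>
        sum_list (map (\<lambda>(c', c''). c' x z g * c'' w y h) xs)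
          = (if z = w then c x y (cmp x z y g h) else 0))"

definition comult :: "('k::field \<Rightarrow> 'h::ab_group_add \<Rightarrow> 'h) \<Rightarrow> ('o \<Rightarrow> 'o \<Rightarrow> 'h set)
    \<Rightarrow> ('o \<Rightarrow> 'o \<Rightarrow> 'o \<Rightarrow> 'h \<Rightarrow> 'h \<Rightarrow> 'h) \<Rightarrow> ('o \<Rightarrow> 'o \<Rightarrow> 'h \<Rightarrow> 'k)
    \<Rightarrow> (('o \<Rightarrow> 'o \<Rightarrow> 'h \<Rightarrow> 'k) \<times> ('o \<Rightarrow> 'o \<Rightarrow> 'h \<Rightarrow> 'k)) list" where
  "comult s Hom cmp c = (SOME xs. set xs \<subseteq> CE s Hom \<times> CE s Hom \<and> comult_rep Hom cmp c xs)"

text \<open>The coaction \<nu> : N \<rightarrow> N \<otimes> C_E is given by a representing formal sum nu n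
  for every n; phi \<cdot> n = (id \<otimes> phi)(\<nu> n).\<close>
definition coact :: "('k::field \<Rightarrow> 'n::ab_group_add \<Rightarrow> 'n) \<Rightarrow> ('n \<Rightarrow> ('n \<times> 'c) list)
    \<Rightarrow> ('c \<Rightarrow> 'k) \<Rightarrow> 'n \<Rightarrow> 'n" where
  "coact sN nu phi n = sum_list (map (\<lambda>(m, c). sN (phi c) m) (nu n))"

definition rcomod :: "('k::field \<Rightarrow> 'h::ab_group_add \<Rightarrow> 'h) \<Rightarrow> ('o \<Rightarrow> 'o \<Rightarrow> 'h set)
    \<Rightarrow> ('o \<Rightarrow> 'o \<Rightarrow> 'o \<Rightarrow> 'h \<Rightarrow> 'h \<Rightarrow> 'h) \<Rightarrow> ('o \<Rightarrow> 'h)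
    \<Rightarrow> ('k \<Rightarrow> 'n::ab_group_add \<Rightarrow> 'n) \<Rightarrow> 'n set
    \<Rightarrow> ('n \<Rightarrow> ('n \<times> ('o \<Rightarrow> 'o \<Rightarrow> 'h \<Rightarrow> 'k)) list) \<Rightarrow> bool" where
  "rcomod s Hom cmp idm sN N nu \<longleftrightarrow>
     is_space sN N \<and>
     (\<forall>n\<in>N. set (nu n) \<subseteq> N \<times> CE s Hom) \<and>
     (\<forall>a. \<forall>n\<in>N. \<forall>n'\<in>N. teq2 sN N cscale (CE s Hom) (nu (sN a n + n'))
        (map (\<lambda>(m, c). (sN a m, c)) (nu n) @ nu n')) \<and>
     (\<forall>n\<in>N. teq3 sN N cscale (CE s Hom) cscale (CE s Hom)
        (concat (map (\<lambda>(m, c). map (\<lambda>(m', c'). (m', c', c)) (nu m)) (nu n)))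
        (concat (map (\<lambda>(m, c). map (\<lambda>(c', c''). (m, c', c'')) (comult s Hom cmp c)) (nu n)))) \<and>
     (\<forall>n\<in>N. coact sN nu (counit idm) n = n)"

definition lf_rcomod :: "('k::field \<Rightarrow> 'h::ab_group_add \<Rightarrow> 'h) \<Rightarrow> ('o \<Rightarrow> 'o \<Rightarrow> 'h set)
    \<Rightarrow> ('o \<Rightarrow> 'o \<Rightarrow> 'o \<Rightarrow> 'h \<Rightarrow> 'h \<Rightarrow> 'h) \<Rightarrow> ('o \<Rightarrow> 'h)
    \<Rightarrow> ('k \<Rightarrow> 'n::ab_group_add \<Rightarrow> 'n) \<Rightarrow> 'n set
    \<Rightarrow> ('n \<Rightarrow> ('n \<times> ('o \<Rightarrow> 'o \<Rightarrow> 'h \<Rightarrow> 'k)) list) \<Rightarrow> bool" where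
  "lf_rcomod s Hom cmp idm sN N nu \<longleftrightarrow> rcomod s Hom cmp idm sN N nu \<and>
     (\<forall>x. fin_dim sN (coact sN nu (ev_id idm x) ` N))"

definition comod_hom :: "('k::field \<Rightarrow> 'h::ab_group_add \<Rightarrow> 'h) \<Rightarrow> ('o \<Rightarrow> 'o \<Rightarrow> 'h set)
    \<Rightarrow> ('k \<Rightarrow> 'm::ab_group_add \<Rightarrow> 'm) \<Rightarrow> 'm set \<Rightarrow> ('m \<Rightarrow> ('m \<times> ('o \<Rightarrow> 'o \<Rightarrow> 'h \<Rightarrow> 'k)) list)
    \<Rightarrow> ('k \<Rightarrow> 'n::ab_group_add \<Rightarrow> 'n) \<Rightarrow> 'n set \<Rightarrow> ('n \<Rightarrow> ('n \<times> ('o \<Rightarrow> 'o \<Rightarrow> 'h \<Rightarrow> 'k)) list)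
    \<Rightarrow> ('m \<Rightarrow> 'n) set" where
  "comod_hom s Hom sM M nuM sN N nuN =
     {f \<in> lin_maps sM M sN N. \<forall>m\<in>M. teq2 sN N cscale (CE s Hom) (nuN (f m))
        (map (\<lambda>(m', c). (f m', c)) (nuM m))}"

definition contra_hom :: "('k::field \<Rightarrow> 'h::ab_group_add \<Rightarrow> 'h) \<Rightarrow> ('o \<Rightarrow> 'o \<Rightarrow> 'h set)
    \<Rightarrow> ('k \<Rightarrow> 'p::ab_group_add \<Rightarrow> 'p) \<Rightarrow> 'p set \<Rightarrow> ((('o \<Rightarrow> 'o \<Rightarrow> 'h \<Rightarrow> 'k) \<Rightarrow> 'p) \<Rightarrow> 'p)
    \<Rightarrow> ('k \<Rightarrow> 'q::ab_group_add \<Rightarrow> 'q) \<Rightarrow> 'q set \<Rightarrow> ((('o \<Rightarrow> 'o \<Rightarrow> 'h \<Rightarrow> 'k) \<Rightarrow> 'q) \<Rightarrow> 'q)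
    \<Rightarrow> ('p \<Rightarrow> 'q) set" where
  "contra_hom s Hom sP P piP sQ Q piQ =
     {F \<in> lin_maps sP P sQ Q. \<forall>g \<in> lin_maps cscale (CE s Hom) sP P. F (piP g) = piQ (F \<circ> g)}"

definition dual_pi :: "'n set \<Rightarrow> ('n \<Rightarrow> ('n \<times> 'c) list) \<Rightarrow> ('c \<Rightarrow> 'n \<Rightarrow> 'k::field) \<Rightarrow> 'n \<Rightarrow> 'k" where
  "dual_pi N nu g = (\<lambda>n. if n \<in> N then sum_list (map (\<lambda>(m, c). g c m) (nu n)) else 0)"

definition dualmap :: "('k::field \<Rightarrow> 'n::ab_group_add \<Rightarrow> 'n) \<Rightarrow> 'n set \<Rightarrow> 'm set
    \<Rightarrow> ('m \<Rightarrow> 'n) \<Rightarrow> ('n \<Rightarrow> 'k) \<Rightarrow> 'm \<Rightarrow> 'k" where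
  "dualmap sN N M f = (\<lambda>\<psi>. if \<psi> \<in> dual sN N then (\<lambda>m. if m \<in> M then \<psi> (f m) else 0) else 0)"

end

theory Submission
  imports Defs "HOL.Vector_Spaces"
begin


lemma sum_fun_apply: "(\<Sum>i\<in>I. f i) x = (\<Sum>i\<in>I. f i x)"
  by (induct I rule: infinite_finite_induct) auto

lemma vs_vs: "vs_axioms s \<Longrightarrow> vector_space s"
  by (simp add: vs_axioms_def vector_space_def)

lemma vs_mult: "vs_axioms ((*) :: 'k::field \<Rightarrow> 'k \<Rightarrow> 'k)"
  by (simp add: vs_axioms_def algebra_simps)

lemma vs_fscale: "vs_axioms (fscale ((*) :: 'k::field \<Rightarrow> 'k \<Rightarrow> 'k) :: 'k \<Rightarrow> ('a \<Rightarrow> 'k) \<Rightarrow> _)"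
  by (simp add: vs_axioms_def fscale_def algebra_simps fun_eq_iff)

lemma vs_cscale: "vs_axioms (cscale :: 'k::field \<Rightarrow> ('o \<Rightarrow> 'o \<Rightarrow> 'h \<Rightarrow> 'k) \<Rightarrow> _)"
  by (simp add: vs_axioms_def cscale_def algebra_simps fun_eq_iff)

lemma vs_module: "vs_axioms s \<Longrightarrow> module s"
  by (simp add: module_iff_vector_space vs_vs)

lemma is_space_subspace: "is_space s V \<Longrightarrow> module.subspace s V"
  by (simp add: is_space_def module.subspace_def[OF vs_module])

lemma is_space_vs: "is_space s V \<Longrightarrow> vector_space s"
  by (simp add: is_space_def vs_vs)

lemma is_space_sum: "is_space s V \<Longrightarrow> (\<And>i. i \<in> I \<Longrightarrow> v i \<in> V) \<Longrightarrow> (\<Sum>i\<in>I. v i) \<in> V"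
  by (induct I rule: infinite_finite_induct) (auto simp: is_space_def)

lemma is_space_diff: "is_space s V \<Longrightarrow> x \<in> V \<Longrightarrow> y \<in> V \<Longrightarrow> x - y \<in> V"
  using module.subspace_diff[of s V x y] is_space_subspace[of s V] is_space_vs[of s V]
  by (simp add: module_iff_vector_space)

lemma is_space_sum_list: "is_space s V \<Longrightarrow> set xs \<subseteq> V \<Longrightarrow> sum_list xs \<in> V"
  by (induct xs) (auto simp: is_space_def)

lemma lin_zero: "linear_on s1 V s2 W f \<Longrightarrow> is_space s1 V \<Longrightarrow> f 0 = 0"
proof -
  assume a: "linear_on s1 V s2 W f" "is_space s1 V"
  then have "f (0 + 0) = f 0 + f 0" unfolding linear_on_def is_space_def by blast
  then show ?thesis by simp
qed

lemma lin_add: "linear_on s1 V s2 W f \<Longrightarrow> x \<in> V \<Longrightarrow> y \<in> V \<Longrightarrow> f (x + y) = f x + f y"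
  by (simp add: linear_on_def)

lemma lin_scale: "linear_on s1 V s2 W f \<Longrightarrow> x \<in> V \<Longrightarrow> f (s1 a x) = s2 a (f x)"
  by (simp add: linear_on_def)

lemma lin_in: "linear_on s1 V s2 W f \<Longrightarrow> x \<in> V \<Longrightarrow> f x \<in> W"
  by (simp add: linear_on_def)

lemma lin_sum:
  assumes "linear_on s1 V s2 W f" "is_space s1 V" "\<And>i. i \<in> I \<Longrightarrow> v i \<in> V"
  shows "f (\<Sum>i\<in>I. v i) = (\<Sum>i\<in>I. f (v i))"
  using assms(3)
proof (induct I rule: infinite_finite_induct)
  case (insert i I)
  then show ?case using assms(1,2)
    by (simp add: lin_add is_space_sum)
qed (use assms lin_zero in auto)

lemma lin_diff:
  assumes "linear_on s1 V s2 W f" "is_space s1 V" "x \<in> V" "y \<in> V"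
  shows "f (x - y) = f x - f y"
proof -
  have "x - y \<in> V" using assms is_space_diff by blast
  then have "f (x - y + y) = f (x - y) + f y" using assms lin_add by blast
  then show ?thesis by (simp add: algebra_simps)
qed

lemma fun_lin_sum:
  assumes "linear_on s V (*) UNIV f" "is_space s V" "\<And>i. i \<in> I \<Longrightarrow> v i \<in> V"
  shows "f (\<Sum>i\<in>I. s (a i) (v i)) = (\<Sum>i\<in>I. a i * f (v i))"
  using assms lin_sum[OF assms(1,2), of I "\<lambda>i. s (a i) (v i)"]
  by (simp add: is_space_def lin_scale)

lemma fun_lin_sum_list:
  assumes "linear_on s V (*) UNIV f" "is_space s V" "set xs \<subseteq> V \<times> X"
  shows "f (sum_list (map (\<lambda>(m, c). s (a c) m) xs)) = sum_list (map (\<lambda>(m, c). a c * f m) xs)"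
  using assms(3)
proof (induct xs)
  case Nil
  then show ?case using lin_zero[OF assms(1,2)] by simp
next
  case (Cons p xs)
  obtain m c where p: "p = (m, c)" by fastforce
  have "m \<in> V" using Cons p by auto
  moreover have "sum_list (map (\<lambda>(m, c). s (a c) m) xs) \<in> V"
    using Cons assms(2) by (intro is_space_sum_list) (auto simp: is_space_def)
  moreover have "s (a c) m \<in> V" using \<open>m \<in> V\<close> assms(2) by (simp add: is_space_def)
  ultimately have "f (s (a c) m + sum_list (map (\<lambda>(m, c). s (a c) m) xs))
      = a c * f m + f (sum_list (map (\<lambda>(m, c). s (a c) m) xs))"
    using assms(1) lin_add lin_scale by metis
  then show ?case using Cons p by simp
qed

lemma sum_list_in:
  assumes "is_space s V" "set xs \<subseteq> V \<times> X"
  shows "sum_list (map (\<lambda>(m, c). s (a c) m) xs) \<in> V"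
  using assms by (intro is_space_sum_list) (auto simp: is_space_def)

lemma sum_list_sum_swap:
  "sum_list (map (\<lambda>p. \<Sum>i\<in>I. f i p) xs) = (\<Sum>i\<in>I. sum_list (map (f i) xs))"
  by (induct xs) (auto simp: sum.distrib)

lemma dual_iff: "\<psi> \<in> dual s V \<longleftrightarrow> linear_on s V (*) UNIV \<psi> \<and> (\<forall>x. x \<notin> V \<longrightarrow> \<psi> x = 0)"
  by (simp add: dual_def lin_maps_def)

lemma dual_zero: "0 \<in> dual s V"
  by (simp add: dual_iff linear_on_def)

lemma dual_add: "is_space s V \<Longrightarrow> \<psi> \<in> dual s V \<Longrightarrow> \<psi>' \<in> dual s V \<Longrightarrow> \<psi> + \<psi>' \<in> dual s V"
  unfolding dual_iff linear_on_def by (simp add: algebra_simps)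

lemma dual_fscale: "is_space s V \<Longrightarrow> \<psi> \<in> dual s V \<Longrightarrow> fscale (*) a \<psi> \<in> dual s V"
  unfolding dual_iff linear_on_def fscale_def by (simp add: algebra_simps)

lemma dual_space: "is_space s V \<Longrightarrow> is_space (fscale (*)) (dual s V)"
  unfolding is_space_def[of "fscale (*)"] using vs_fscale dual_zero dual_add dual_fscale by blast

lemma dual_restrict:
  assumes "is_space s V" "Vector_Spaces.linear s (*) g"
  shows "(\<lambda>v. if v \<in> V then g v else 0) \<in> dual s V"
proof -
  interpret linear s "(*)" g by fact
  have "\<forall>x\<in>V. \<forall>y\<in>V. x + y \<in> V" "\<forall>a. \<forall>x\<in>V. s a x \<in> V" using assms(1) by (auto simp: is_space_def)
  then show ?thesis unfolding dual_iff linear_on_def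
    by (simp add: add scale)
qed



lemma free_Cons: "free (x # xs) q = (if q = x then 1 else 0) + (free xs q :: 'k::field)"
  by (simp add: free_def)

lemma free_zero: "q \<notin> set xs \<Longrightarrow> free xs q = (0::'k::field)"
  by (simp add: free_def count_list_0_iff)

lemma free_sum:
  "finite T \<Longrightarrow> set xs \<subseteq> T \<Longrightarrow> sum_list (map \<Phi> xs) = (\<Sum>q\<in>T. free xs q * (\<Phi> q :: 'k::field))"
proof (induct xs)
  case Nil
  then show ?case by (simp add: free_def)
next
  case (Cons x xs)
  have e: "free (x # xs) q * \<Phi> q = (if q = x then \<Phi> q else 0) + free xs q * \<Phi> q" for q
    by (simp add: free_Cons distrib_right)
  have "(\<Sum>q\<in>T. free (x # xs) q * \<Phi> q) = (\<Sum>q\<in>T. (if q = x then \<Phi> q else 0)) + (\<Sum>q\<in>T. free xs q * \<Phi> q)"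
    by (simp only: e sum.distrib)
  also have "(\<Sum>q\<in>T. (if q = x then \<Phi> q else 0)) = \<Phi> x" using Cons by (simp add: sum.delta)
  finally show ?case using Cons by simp
qed

lemma sum_delta_mult: "finite T \<Longrightarrow> p \<in> T \<Longrightarrow> (\<Sum>q\<in>T. delta p q * (\<Phi> q :: 'k::field)) = \<Phi> p"
proof -
  assume "finite T" "p \<in> T"
  have e: "delta p q * \<Phi> q = (if q = p then \<Phi> q else 0)" for q by (auto simp: delta_def)
  show ?thesis using sum.delta[of T p \<Phi>] \<open>finite T\<close> \<open>p \<in> T\<close> by (simp only: e) simp
qed

definition killed :: "('a \<Rightarrow> 'k::field) \<Rightarrow> ('a \<Rightarrow> 'k) \<Rightarrow> bool" where
  "killed \<Phi> g \<longleftrightarrow> finite {q. g q \<noteq> 0} \<and>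
     (\<forall>T. finite T \<longrightarrow> {q. g q \<noteq> 0} \<subseteq> T \<longrightarrow> (\<Sum>q\<in>T. g q * \<Phi> q) = 0)"

lemma sum_extend:
  assumes "finite T'" "T \<subseteq> T'" "\<And>q. q \<in> T' - T \<Longrightarrow> d q = 0"
  shows "(\<Sum>q\<in>T. d q * \<Phi> q) = (\<Sum>q\<in>T'. d q * (\<Phi> q :: 'k::field))"
  using assms by (intro sum.mono_neutral_left) auto

lemma killedI:
  assumes "finite A" "{q. g q \<noteq> 0} \<subseteq> A"
    "\<And>T. finite T \<Longrightarrow> A \<subseteq> T \<Longrightarrow> (\<Sum>q\<in>T. g q * \<Phi> q) = 0"
  shows "killed \<Phi> g"
  unfolding killed_def
proof (intro conjI allI impI)
  show "finite {q. g q \<noteq> 0}" using assms(1,2) finite_subset by blast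
  fix T assume T: "finite T" "{q. g q \<noteq> 0} \<subseteq> T"
  have "(\<Sum>q\<in>T. g q * \<Phi> q) = (\<Sum>q\<in>T \<union> A. g q * \<Phi> q)"
    using T assms by (intro sum_extend) auto
  also have "\<dots> = 0" using T assms by auto
  finally show "(\<Sum>q\<in>T. g q * \<Phi> q) = 0" .
qed

lemma fspan_killed:
  assumes "d \<in> fspan G" "\<And>g. g \<in> G \<Longrightarrow> killed \<Phi> g"
  shows "killed \<Phi> d"
proof -
  obtain F a where F: "finite F" "F \<subseteq> G" "d = (\<lambda>q. \<Sum>g\<in>F. a g * g q)"
    using assms(1) unfolding fspan_def by blast
  define A where "A = (\<Union>g\<in>F. {q. g q \<noteq> 0})"
  have fA: "finite A" using F assms(2) unfolding A_def killed_def by auto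
  have sA: "{q. d q \<noteq> 0} \<subseteq> A"
  proof
    fix q assume "q \<in> {q. d q \<noteq> 0}"
    then have "(\<Sum>g\<in>F. a g * g q) \<noteq> 0" using F by simp
    then obtain g where "g \<in> F" "a g * g q \<noteq> 0" by (meson sum.neutral)
    then show "q \<in> A" unfolding A_def by auto
  qed
  show ?thesis
  proof (rule killedI[OF fA sA])
    fix T assume T: "finite T" "A \<subseteq> T"
    have "(\<Sum>q\<in>T. d q * \<Phi> q) = (\<Sum>g\<in>F. a g * (\<Sum>q\<in>T. g q * \<Phi> q))"
    proof -
      have "(\<Sum>q\<in>T. d q * \<Phi> q) = (\<Sum>q\<in>T. \<Sum>g\<in>F. a g * (g q * \<Phi> q))"
        using F by (simp add: sum_distrib_right mult.assoc)
      also have "\<dots> = (\<Sum>g\<in>F. \<Sum>q\<in>T. a g * (g q * \<Phi> q))" by (rule sum.swap)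
      also have "\<dots> = (\<Sum>g\<in>F. a g * (\<Sum>q\<in>T. g q * \<Phi> q))" by (simp add: sum_distrib_left)
      finally show ?thesis .
    qed
    also have "\<dots> = 0"
    proof (intro sum.neutral ballI)
      fix g assume "g \<in> F"
      then have "killed \<Phi> g" "{q. g q \<noteq> 0} \<subseteq> T" using assms(2) F T unfolding A_def by auto
      then show "a g * (\<Sum>q\<in>T. g q * \<Phi> q) = 0" using T unfolding killed_def by auto
    qed
    finally show "(\<Sum>q\<in>T. d q * \<Phi> q) = 0" .
  qed
qed

lemma killed_rel3:
  assumes "\<Phi> p1 - \<Phi> p2 - \<Phi> p3 = 0"
  shows "killed \<Phi> (delta p1 - delta p2 - delta p3)"
proof (rule killedI[of "{p1, p2, p3}"])
  show "{q. (delta p1 - delta p2 - delta p3) q \<noteq> 0} \<subseteq> {p1, p2, p3}"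
    by (auto simp: delta_def)
  fix T assume "finite T" "{p1, p2, p3} \<subseteq> T"
  then show "(\<Sum>q\<in>T. (delta p1 - delta p2 - delta p3) q * \<Phi> q) = 0"
    using assms by (simp add: left_diff_distrib sum_subtractf sum_delta_mult)
qed simp

lemma killed_rels:
  assumes "\<Phi> p1 - a * \<Phi> p2 = 0"
  shows "killed \<Phi> (delta p1 - (\<lambda>q. a * delta p2 q))"
proof (rule killedI[of "{p1, p2}"])
  show "{q. (delta p1 - (\<lambda>q. a * delta p2 q)) q \<noteq> 0} \<subseteq> {p1, p2}"
    by (auto simp: delta_def)
  fix T assume "finite T" "{p1, p2} \<subseteq> T"
  then show "(\<Sum>q\<in>T. (delta p1 - (\<lambda>q. a * delta p2 q)) q * \<Phi> q) = 0"
    using assms by (simp add: left_diff_distrib sum_subtractf sum_delta_mult mult.assoc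
        flip: sum_distrib_left)
qed simp

definition bilin_on :: "('k::field \<Rightarrow> 'v::ab_group_add \<Rightarrow> 'v) \<Rightarrow> 'v set
    \<Rightarrow> ('k \<Rightarrow> 'w::ab_group_add \<Rightarrow> 'w) \<Rightarrow> 'w set \<Rightarrow> ('v \<times> 'w \<Rightarrow> 'k) \<Rightarrow> bool" where
  "bilin_on sV V sW W \<Phi> \<longleftrightarrow>
     (\<forall>x\<in>V. \<forall>x'\<in>V. \<forall>y\<in>W. \<Phi> (x + x', y) = \<Phi> (x, y) + \<Phi> (x', y)) \<and>
     (\<forall>x\<in>V. \<forall>y\<in>W. \<forall>y'\<in>W. \<Phi> (x, y + y') = \<Phi> (x, y) + \<Phi> (x, y')) \<and>
     (\<forall>a. \<forall>x\<in>V. \<forall>y\<in>W. \<Phi> (sV a x, y) = a * \<Phi> (x, y)) \<and>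
     (\<forall>a. \<forall>x\<in>V. \<forall>y\<in>W. \<Phi> (x, sW a y) = a * \<Phi> (x, y))"

lemma rel2_killed:
  assumes "bilin_on sV V sW W \<Phi>" "g \<in> rel2 sV V sW W"
  shows "killed \<Phi> g"
  using assms(2) unfolding rel2_def
proof (elim UnE)
  assume "g \<in> {delta (x + x', y) - delta (x, y) - delta (x', y) | x x' y. x \<in> V \<and> x' \<in> V \<and> y \<in> W}"
  then obtain x x' y where "g = delta (x + x', y) - delta (x, y) - delta (x', y)" "x \<in> V" "x' \<in> V" "y \<in> W"
    by blast
  then show ?thesis using assms(1) unfolding bilin_on_def by (simp add: killed_rel3)
next
  assume "g \<in> {delta (x, y + y') - delta (x, y) - delta (x, y') | x y y'. x \<in> V \<and> y \<in> W \<and> y' \<in> W}"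
  then obtain x y y' where "g = delta (x, y + y') - delta (x, y) - delta (x, y')" "x \<in> V" "y' \<in> W" "y \<in> W"
    by blast
  then show ?thesis using assms(1) unfolding bilin_on_def by (simp add: killed_rel3)
next
  assume "g \<in> {delta (sV a x, y) - (\<lambda>q. a * delta (x, y) q) | a x y. x \<in> V \<and> y \<in> W}"
  then obtain a x y where "g = delta (sV a x, y) - (\<lambda>q. a * delta (x, y) q)" "x \<in> V" "y \<in> W"
    by blast
  then show ?thesis using assms(1) unfolding bilin_on_def by (simp add: killed_rels)
next
  assume "g \<in> {delta (x, sW a y) - (\<lambda>q. a * delta (x, y) q) | a x y. x \<in> V \<and> y \<in> W}"
  then obtain a x y where "g = delta (x, sW a y) - (\<lambda>q. a * delta (x, y) q)" "x \<in> V" "y \<in> W"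
    by blast
  then show ?thesis using assms(1) unfolding bilin_on_def by (simp add: killed_rels)
qed

lemma teq2_pair:
  fixes \<Phi> :: "'v::ab_group_add \<times> 'w::ab_group_add \<Rightarrow> 'k::field"
  assumes "teq2 sV V sW W xs ys" "bilin_on sV V sW W \<Phi>"
  shows "sum_list (map \<Phi> xs) = sum_list (map \<Phi> ys)"
proof -
  let ?T = "set xs \<union> set ys"
  have "killed \<Phi> (free xs - free ys)"
    using assms rel2_killed fspan_killed unfolding teq2_def by blast
  moreover have "{q. (free xs - free ys :: _ \<Rightarrow> 'k) q \<noteq> 0} \<subseteq> ?T"
  proof
    fix q assume "q \<in> {q. (free xs - free ys :: _ \<Rightarrow> 'k) q \<noteq> 0}"
    then show "q \<in> ?T" by (cases "q \<in> set xs"; cases "q \<in> set ys"; simp add: fun_diff_def free_zero)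
  qed
  ultimately have "(\<Sum>q\<in>?T. (free xs - free ys) q * \<Phi> q) = 0"
    unfolding killed_def by blast
  then show ?thesis
    by (simp add: free_sum[of ?T] left_diff_distrib sum_subtractf)
qed



lemma vs_pair: "is_space s V \<Longrightarrow> vector_space_pair s ((*) :: 'k::field \<Rightarrow> 'k \<Rightarrow> 'k)"
  unfolding vector_space_pair_def using is_space_vs vs_vs[OF vs_mult] by blast

lemma dual_basis:
  assumes "is_space s V" "B \<subseteq> V" "\<not> module.dependent s B"
  shows "\<exists>\<beta>. \<beta> \<in> dual s V \<and> (\<forall>b'\<in>B. \<beta> b' = (if b' = b then 1 else 0))"
proof -
  interpret vp: vector_space_pair s "(*) :: 'a \<Rightarrow> 'a \<Rightarrow> 'a" using vs_pair[OF assms(1)] .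
  obtain g where g: "Vector_Spaces.linear s (*) g" "\<forall>x\<in>B. g x = (if x = b then 1 else 0)"
    using vp.linear_independent_extend[of B "\<lambda>x. if x = b then 1 else 0"] assms(3) by blast
  show ?thesis
    by (rule exI[of _ "\<lambda>v. if v \<in> V then g v else 0"])
      (use g assms(1,2) dual_restrict in auto)
qed

lemma separate:
  assumes "is_space s V" "v \<in> V" "v \<noteq> 0"
  shows "\<exists>\<psi>\<in>dual s V. \<psi> v \<noteq> 0"
proof -
  interpret vV: vector_space s using is_space_vs[OF assms(1)] .
  have "\<not> vV.dependent {v}" using assms(3) by simp
  then obtain \<beta> where "\<beta> \<in> dual s V" "\<beta> v = 1"
    using dual_basis[OF assms(1), of "{v}" v] assms(2) by auto
  then show ?thesis by force
qed

lemma separate_eq: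
  assumes "is_space s V" "v \<in> V" "w \<in> V" "\<And>\<psi>. \<psi> \<in> dual s V \<Longrightarrow> \<psi> v = \<psi> w"
  shows "v = w"
proof (rule ccontr)
  assume "v \<noteq> w"
  then have "v - w \<noteq> 0" by simp
  moreover have vw: "v - w \<in> V" using assms is_space_diff by blast
  ultimately obtain \<psi> where \<psi>: "\<psi> \<in> dual s V" "\<psi> (v - w) \<noteq> 0" using separate[OF assms(1)] by blast
  moreover have "\<psi> (v - w) = \<psi> v - \<psi> w"
    using \<psi>(1) assms lin_diff unfolding dual_iff by blast
  ultimately show False using assms(4)[OF \<psi>(1)] by simp
qed

lemma functional_linear_on:
  assumes "is_space s V"
    "\<And>\<psi> \<psi>' a. \<psi> \<in> dual s V \<Longrightarrow> \<psi>' \<in> dual s V \<Longrightarrow> \<Lambda> (fscale (*) a \<psi> + \<psi>') = a * \<Lambda> \<psi> + \<Lambda> \<psi>'"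
  shows "linear_on (fscale (*)) (dual s V) (*) UNIV \<Lambda>"
proof -
  have f1: "fscale (*) 1 \<psi> = \<psi>" for \<psi> :: "'b \<Rightarrow> 'a" by (simp add: fscale_def)
  have h: "\<Lambda> (fscale (*) 1 0 + 0) = 1 * \<Lambda> 0 + \<Lambda> 0"
    by (rule assms(2)[OF dual_zero dual_zero])
  have "\<Lambda> 0 = \<Lambda> 0 + \<Lambda> 0" using h by (simp only: f1 add_0_right mult_1)
  then have "\<Lambda> 0 = 0" by (metis add_cancel_right_right)
  show ?thesis unfolding linear_on_def
  proof (intro conjI ballI allI)
    fix x y assume "x \<in> dual s V" "y \<in> dual s V"
    then show "\<Lambda> (x + y) = \<Lambda> x + \<Lambda> y" using assms(2)[of x y 1] by (simp add: f1)
  next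
    fix a x assume "x \<in> dual s V"
    then show "\<Lambda> (fscale (*) a x) = a * \<Lambda> x"
      using assms(2)[of x 0 a, OF _ dual_zero] \<open>\<Lambda> 0 = 0\<close> by simp
  qed simp
qed

lemma represent:
  assumes "is_space s V" "finite B0" "B0 \<subseteq> V"
    "\<And>\<psi> \<psi>'. \<psi> \<in> dual s V \<Longrightarrow> \<psi>' \<in> dual s V \<Longrightarrow> (\<forall>b\<in>B0. \<psi> b = \<psi>' b) \<Longrightarrow> \<Lambda> \<psi> = \<Lambda> \<psi>'"
    "\<And>\<psi> \<psi>' a. \<psi> \<in> dual s V \<Longrightarrow> \<psi>' \<in> dual s V \<Longrightarrow> \<Lambda> (fscale (*) a \<psi> + \<psi>') = a * \<Lambda> \<psi> + \<Lambda> \<psi>'"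
  shows "\<exists>n\<in>V. \<forall>\<psi>\<in>dual s V. \<Lambda> \<psi> = \<psi> n"
proof -
  interpret vV: vector_space s using is_space_vs[OF assms(1)] .
  obtain B where B: "B \<subseteq> B0" "\<not> vV.dependent B" "B0 \<subseteq> vV.span B"
    using vV.maximal_independent_subset[of B0] by blast
  have fB: "finite B" using B(1) assms(2) finite_subset by blast
  have BV: "B \<subseteq> V" using B(1) assms(3) by blast
  have "\<forall>b\<in>B. \<exists>\<beta>. \<beta> \<in> dual s V \<and> (\<forall>b'\<in>B. \<beta> b' = (if b' = b then 1 else 0))"
    using dual_basis[OF assms(1) BV B(2)] by blast
  then obtain \<beta> where \<beta>: "\<And>b. b \<in> B \<Longrightarrow> \<beta> b \<in> dual s V"
    "\<And>b b'. b \<in> B \<Longrightarrow> b' \<in> B \<Longrightarrow> \<beta> b b' = (if b' = b then 1 else 0)"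
    by metis
  have Dsp: "is_space (fscale (*)) (dual s V)" using dual_space[OF assms(1)] .
  have Llin: "linear_on (fscale (*)) (dual s V) (*) UNIV \<Lambda>"
    using functional_linear_on[OF assms(1) assms(5)] .
  define n where "n = (\<Sum>b\<in>B. s (\<Lambda> (\<beta> b)) b)"
  have nV: "n \<in> V" unfolding n_def
    using BV assms(1) by (intro is_space_sum) (auto simp: is_space_def)
  show ?thesis
  proof (intro bexI[OF _ nV] ballI)
    fix \<psi> assume \<psi>: "\<psi> \<in> dual s V"
    define \<chi> where "\<chi> = (\<Sum>b\<in>B. fscale (*) (\<psi> b) (\<beta> b))"
    have \<chi>D: "\<chi> \<in> dual s V" unfolding \<chi>_def
      using Dsp \<beta>(1) by (intro is_space_sum) (auto simp: is_space_def)
    have agree: "\<psi> v = \<chi> v" if "v \<in> B0" for v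
    proof -
      have "v \<in> vV.span B" using that B(3) by blast
      then obtain u where u: "v = (\<Sum>b\<in>B. s (u b) b)" using vV.span_finite[OF fB] by blast
      have "\<psi> v = (\<Sum>b\<in>B. u b * \<psi> b)"
        using u fun_lin_sum[of s V \<psi> B id u] \<psi> assms(1) BV unfolding dual_iff by auto
      moreover have "\<beta> b' v = u b'" if "b' \<in> B" for b'
      proof -
        have "\<beta> b' v = (\<Sum>b\<in>B. u b * \<beta> b' b)"
          using u fun_lin_sum[of s V "\<beta> b'" B id u] \<beta>(1)[OF that] assms(1) BV unfolding dual_iff by auto
        also have "\<dots> = (\<Sum>b\<in>B. if b = b' then u b else 0)"
          using \<beta>(2)[OF that] by (intro sum.cong) auto
        also have "\<dots> = u b'" using fB that by (simp add: sum.delta')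
        finally show ?thesis .
      qed
      then have "\<chi> v = (\<Sum>b\<in>B. \<psi> b * u b)"
        unfolding \<chi>_def by (simp add: sum_fun_apply fscale_def)
      ultimately show ?thesis by (simp add: mult.commute)
    qed
    have "\<Lambda> \<psi> = \<Lambda> \<chi>" using assms(4)[OF \<psi> \<chi>D] agree by blast
    also have "\<Lambda> \<chi> = (\<Sum>b\<in>B. \<psi> b * \<Lambda> (\<beta> b))"
      unfolding \<chi>_def using fun_lin_sum[OF Llin Dsp, of B \<beta> "\<lambda>b. \<psi> b"] \<beta>(1) by simp
    also have "\<dots> = \<psi> n"
    proof -
      have "\<psi> n = (\<Sum>b\<in>B. \<Lambda> (\<beta> b) * \<psi> b)"
        unfolding n_def apply (rule fun_lin_sum[of s V]) using \<psi> assms(1) BV unfolding dual_iff by auto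
      then show ?thesis by (simp add: mult.commute)
    qed
    finally show "\<Lambda> \<psi> = \<psi> n" .
  qed
qed



lemma fspan_span: "fspan G = module.span (fscale (*)) (G :: ('a \<Rightarrow> 'k::field) set)"
proof -
  interpret vF: vector_space "fscale (*) :: 'k \<Rightarrow> ('a \<Rightarrow> 'k) \<Rightarrow> _" by (rule vs_vs[OF vs_fscale])
  have e: "(\<Sum>a\<in>t. fscale (*) (r a) a) = (\<lambda>q. \<Sum>g\<in>t. r g * g q)" for t r
    by (simp add: fun_eq_iff sum_fun_apply fscale_def)
  show ?thesis unfolding fspan_def vF.span_explicit e by blast
qed

lemma rel2_I1: "x \<in> V \<Longrightarrow> x' \<in> V \<Longrightarrow> y \<in> W \<Longrightarrow>
    delta (x + x', y) - delta (x, y) - delta (x', y) \<in> rel2 sV V sW W"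
  unfolding rel2_def by (rule UnI1, rule UnI1, rule UnI1, blast)

lemma rel2_I2: "x \<in> V \<Longrightarrow> y \<in> W \<Longrightarrow> y' \<in> W \<Longrightarrow>
    delta (x, y + y') - delta (x, y) - delta (x, y') \<in> rel2 sV V sW W"
  unfolding rel2_def by (rule UnI1, rule UnI1, rule UnI2, blast)

lemma rel2_I3: "x \<in> V \<Longrightarrow> y \<in> W \<Longrightarrow>
    delta (sV a x, y) - fscale (*) a (delta (x, y)) \<in> rel2 sV V sW W"
  unfolding rel2_def fscale_def by (rule UnI1, rule UnI2, blast)

lemma rel2_I4: "x \<in> V \<Longrightarrow> y \<in> W \<Longrightarrow>
    delta (x, sW a y) - fscale (*) a (delta (x, y)) \<in> rel2 sV V sW W"
  unfolding rel2_def fscale_def by (rule UnI2, blast)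

lemma ag_id: "(A::'a::ab_group_add) - (C + D) = (A - E - F) + (E - C) + (F - D)"
  by (simp add: algebra_simps)

lemma R0:
  fixes sV :: "'k::field \<Rightarrow> 'v::ab_group_add \<Rightarrow> 'v" and sW :: "'k \<Rightarrow> 'w::ab_group_add \<Rightarrow> 'w"
  assumes V: "is_space sV V" and W: "is_space sW W" and y: "y \<in> W"
  shows "(delta (0, y) :: _ \<Rightarrow> 'k) \<in> module.span (fscale (*)) (rel2 sV V sW W)"
proof -
  interpret vF: vector_space "fscale (*) :: 'k \<Rightarrow> ('v \<times> 'w \<Rightarrow> 'k) \<Rightarrow> _" by (rule vs_vs[OF vs_fscale])
  have "delta (0 + 0, y) - delta (0, y) - delta (0, y) \<in> rel2 sV V sW W"
    using V y by (intro rel2_I1) (auto simp: is_space_def)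
  then have "- (delta (0 + 0, y) - delta (0, y) - (delta (0, y) :: _ \<Rightarrow> 'k)) \<in> vF.span (rel2 sV V sW W)"
    by (intro vF.span_neg vF.span_base)
  then show ?thesis by simp
qed

lemma R1:
  fixes sV :: "'k::field \<Rightarrow> 'v::ab_group_add \<Rightarrow> 'v" and sW :: "'k \<Rightarrow> 'w::ab_group_add \<Rightarrow> 'w"
  assumes V: "is_space sV V" and W: "is_space sW W" and x: "x \<in> V" and B: "finite B" "B \<subseteq> W"
  shows "(delta (x, \<Sum>b\<in>B. sW (u b) b) - (\<Sum>b\<in>B. fscale (*) (u b) (delta (x, b))) :: _ \<Rightarrow> 'k)
     \<in> module.span (fscale (*)) (rel2 sV V sW W)"
  using B
proof (induct B rule: finite_induct)
  case empty
  interpret vF: vector_space "fscale (*) :: 'k \<Rightarrow> ('v \<times> 'w \<Rightarrow> 'k) \<Rightarrow> _" by (rule vs_vs[OF vs_fscale])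
  have "(delta (x, 0) :: _ \<Rightarrow> 'k) \<in> vF.span (rel2 sV V sW W)"
  proof -
    have "delta (x, 0 + 0) - delta (x, 0) - delta (x, 0) \<in> rel2 sV V sW W"
      using W x by (intro rel2_I2) (auto simp: is_space_def)
    then have "- (delta (x, 0 + 0) - delta (x, 0) - (delta (x, 0) :: _ \<Rightarrow> 'k)) \<in> vF.span (rel2 sV V sW W)"
      by (intro vF.span_neg vF.span_base)
    then show ?thesis by simp
  qed
  then show ?case by simp
next
  case (insert b B)
  interpret vF: vector_space "fscale (*) :: 'k \<Rightarrow> ('v \<times> 'w \<Rightarrow> 'k) \<Rightarrow> _" by (rule vs_vs[OF vs_fscale])
  define S where "S = (\<Sum>b\<in>B. sW (u b) b)"
  define c where "c = sW (u b) b"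
  have SW: "S \<in> W" unfolding S_def using insert W by (intro is_space_sum) (auto simp: is_space_def)
  have cW: "c \<in> W" unfolding c_def using insert W by (auto simp: is_space_def)
  have e1: "(delta (x, c + S) - delta (x, c) - delta (x, S) :: _ \<Rightarrow> 'k) \<in> vF.span (rel2 sV V sW W)"
    by (rule vF.span_base, rule rel2_I2) (use SW cW x in auto)
  have e2: "(delta (x, c) - fscale (*) (u b) (delta (x, b)) :: _ \<Rightarrow> 'k) \<in> vF.span (rel2 sV V sW W)"
    unfolding c_def by (rule vF.span_base, rule rel2_I4) (use insert x in auto)
  have e3: "(delta (x, S) - (\<Sum>b\<in>B. fscale (*) (u b) (delta (x, b))) :: _ \<Rightarrow> 'k) \<in> vF.span (rel2 sV V sW W)"
    using insert unfolding S_def by blast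
  have "(delta (x, \<Sum>b\<in>insert b B. sW (u b) b) - (\<Sum>b\<in>insert b B. fscale (*) (u b) (delta (x, b))) :: _ \<Rightarrow> 'k)
      = (delta (x, c + S) - delta (x, c) - delta (x, S)) + (delta (x, c) - fscale (*) (u b) (delta (x, b)))
        + (delta (x, S) - (\<Sum>b\<in>B. fscale (*) (u b) (delta (x, b))))"
    unfolding S_def c_def sum.insert[OF insert(1,2)] by (rule ag_id)
  note eq = this
  show ?case unfolding eq by (intro vF.span_add e1 e2 e3)
qed

lemma R2:
  fixes sV :: "'k::field \<Rightarrow> 'v::ab_group_add \<Rightarrow> 'v" and sW :: "'k \<Rightarrow> 'w::ab_group_add \<Rightarrow> 'w"
  assumes V: "is_space sV V" and W: "is_space sW W" and y: "y \<in> W" and I: "finite I" "\<And>i. i \<in> I \<Longrightarrow> n i \<in> V"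
  shows "(delta (\<Sum>i\<in>I. sV (a i) (n i), y) - (\<Sum>i\<in>I. fscale (*) (a i) (delta (n i, y))) :: _ \<Rightarrow> 'k)
     \<in> module.span (fscale (*)) (rel2 sV V sW W)"
  using I
proof (induct I rule: finite_induct)
  case empty
  then show ?case using R0[OF V W y] by simp
next
  case (insert i I)
  interpret vF: vector_space "fscale (*) :: 'k \<Rightarrow> ('v \<times> 'w \<Rightarrow> 'k) \<Rightarrow> _" by (rule vs_vs[OF vs_fscale])
  define S where "S = (\<Sum>i\<in>I. sV (a i) (n i))"
  define c where "c = sV (a i) (n i)"
  have SV: "S \<in> V" unfolding S_def using insert V by (intro is_space_sum) (auto simp: is_space_def)
  have cV: "c \<in> V" unfolding c_def using insert V by (auto simp: is_space_def)
  have e1: "(delta (c + S, y) - delta (c, y) - delta (S, y) :: _ \<Rightarrow> 'k) \<in> vF.span (rel2 sV V sW W)"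
    by (rule vF.span_base, rule rel2_I1) (use SV cV y in auto)
  have e2: "(delta (c, y) - fscale (*) (a i) (delta (n i, y)) :: _ \<Rightarrow> 'k) \<in> vF.span (rel2 sV V sW W)"
    unfolding c_def by (rule vF.span_base, rule rel2_I3) (use insert y in auto)
  have e3: "(delta (S, y) - (\<Sum>i\<in>I. fscale (*) (a i) (delta (n i, y))) :: _ \<Rightarrow> 'k) \<in> vF.span (rel2 sV V sW W)"
    using insert unfolding S_def by blast
  have "(delta (\<Sum>i\<in>insert i I. sV (a i) (n i), y) - (\<Sum>i\<in>insert i I. fscale (*) (a i) (delta (n i, y))) :: _ \<Rightarrow> 'k)
      = (delta (c + S, y) - delta (c, y) - delta (S, y)) + (delta (c, y) - fscale (*) (a i) (delta (n i, y)))
        + (delta (S, y) - (\<Sum>i\<in>I. fscale (*) (a i) (delta (n i, y))))"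
    unfolding S_def c_def sum.insert[OF insert(1,2)] by (rule ag_id)
  note eq = this
  show ?case unfolding eq by (intro vF.span_add e1 e2 e3)
qed



lemma teq2_from_pairs:
  fixes sV :: "'k::field \<Rightarrow> 'v::ab_group_add \<Rightarrow> 'v" and sW :: "'k \<Rightarrow> 'w::ab_group_add \<Rightarrow> 'w"
  assumes V: "is_space sV V" and W: "is_space sW W" and xs: "set xs \<subseteq> V \<times> W" and ys: "set ys \<subseteq> V \<times> W"
    and pairs: "\<And>\<psi> \<phi>. \<psi> \<in> dual sV V \<Longrightarrow> \<phi> \<in> dual sW W \<Longrightarrow>
       sum_list (map (\<lambda>(v, w). \<psi> v * \<phi> w) xs) = sum_list (map (\<lambda>(v, w). \<psi> v * \<phi> w) ys)"
  shows "teq2 sV V sW W xs ys"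
proof -
  interpret vF: vector_space "fscale (*) :: 'k \<Rightarrow> ('v \<times> 'w \<Rightarrow> 'k) \<Rightarrow> _" by (rule vs_vs[OF vs_fscale])
  interpret vW: vector_space sW by (rule is_space_vs[OF W])
  let ?R = "vF.span (rel2 sV V sW W)"
  define S where "S = set xs \<union> set ys"
  define d :: "'v \<times> 'w \<Rightarrow> 'k" where "d = free xs - free ys"
  have fS: "finite S" unfolding S_def by simp
  have SVW: "S \<subseteq> V \<times> W" unfolding S_def using xs ys by blast
  have dS: "d q = 0" if "q \<notin> S" for q
    using that unfolding S_def d_def by (simp add: fun_diff_def free_zero)
  have d_exp: "d = (\<Sum>p\<in>S. fscale (*) (d p) (delta p))"
  proof
    fix q
    have "(\<Sum>p\<in>S. fscale (*) (d p) (delta p)) q = (\<Sum>p\<in>S. if q = p then d p else 0)"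
      by (simp add: sum_fun_apply fscale_def delta_def, intro sum.cong) auto
    also have "\<dots> = d q" using fS dS by (simp add: sum.delta')
    finally show "d q = (\<Sum>p\<in>S. fscale (*) (d p) (delta p)) q" by simp
  qed
  define C0 where "C0 = snd ` S"
  have C0W: "C0 \<subseteq> W" unfolding C0_def using SVW by auto
  obtain B where B: "B \<subseteq> C0" "\<not> vW.dependent B" "C0 \<subseteq> vW.span B"
    using vW.maximal_independent_subset[of C0] by blast
  have fB: "finite B" using B(1) fS unfolding C0_def using finite_subset by blast
  have BW: "B \<subseteq> W" using B(1) C0W by blast
  have "\<forall>c\<in>C0. \<exists>u. c = (\<Sum>b\<in>B. sW (u b) b)" using B(3) vW.span_finite[OF fB] by blast
  then obtain \<alpha> where \<alpha>: "\<And>c. c \<in> C0 \<Longrightarrow> c = (\<Sum>b\<in>B. sW (\<alpha> c b) b)" by metis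
  have "\<forall>b\<in>B. \<exists>\<phi>. \<phi> \<in> dual sW W \<and> (\<forall>b'\<in>B. \<phi> b' = (if b' = b then 1 else 0))"
    using dual_basis[OF W BW B(2)] by blast
  then obtain \<phi> where \<phi>: "\<And>b. b \<in> B \<Longrightarrow> \<phi> b \<in> dual sW W"
    "\<And>b b'. b \<in> B \<Longrightarrow> b' \<in> B \<Longrightarrow> \<phi> b b' = (if b' = b then 1 else 0)"
    by metis
  define v where "v b = (\<Sum>p\<in>S. sV (d p * \<alpha> (snd p) b) (fst p))" for b
  have vV: "v b \<in> V" for b
    unfolding v_def using SVW V by (intro is_space_sum) (auto simp: is_space_def)
  define X where "X p b = fscale (*) (d p * \<alpha> (snd p) b) (delta (fst p, b))" for p b
  have claim1: "d - (\<Sum>b\<in>B. delta (v b, b)) \<in> ?R"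
  proof -
    have t1: "fscale (*) (d p) (delta p - (\<Sum>b\<in>B. fscale (*) (\<alpha> (snd p) b) (delta (fst p, b)))) \<in> ?R"
      if p: "p \<in> S" for p
    proof -
      have "snd p \<in> C0" using p unfolding C0_def by blast
      then have "(delta p :: _ \<Rightarrow> 'k) = delta (fst p, \<Sum>b\<in>B. sW (\<alpha> (snd p) b) b)"
        using \<alpha> by (metis prod.collapse)
      moreover have "fst p \<in> V" using p SVW by auto
      ultimately have "delta p - (\<Sum>b\<in>B. fscale (*) (\<alpha> (snd p) b) (delta (fst p, b))) \<in> ?R"
        using R1[OF V W _ fB BW, of "fst p" "\<alpha> (snd p)"] by simp
      then show ?thesis by (rule vF.span_scale)
    qed
    have t2: "(\<Sum>p\<in>S. X p b) - delta (v b, b) \<in> ?R" if b: "b \<in> B" for b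
    proof -
      have "(delta (v b, b) :: _ \<Rightarrow> 'k) - (\<Sum>p\<in>S. X p b) \<in> ?R"
        unfolding v_def X_def by (rule R2[OF V W _ fS]) (use b BW SVW in auto)
      then have "- (delta (v b, b) - (\<Sum>p\<in>S. X p b)) \<in> ?R" by (rule vF.span_neg)
      then show ?thesis by simp
    qed
    have i1a: "fscale (*) (d p) (delta p - (\<Sum>b\<in>B. fscale (*) (\<alpha> (snd p) b) (delta (fst p, b))))
        = fscale (*) (d p) (delta p) - (\<Sum>b\<in>B. X p b)" for p
      unfolding X_def by (simp add: vF.scale_right_diff_distrib vF.scale_sum_right)
    have i1: "(\<Sum>p\<in>S. fscale (*) (d p) (delta p - (\<Sum>b\<in>B. fscale (*) (\<alpha> (snd p) b) (delta (fst p, b)))))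
        = d - (\<Sum>p\<in>S. \<Sum>b\<in>B. X p b)"
      by (simp only: i1a sum_subtractf flip: d_exp)
    have sw: "(\<Sum>b\<in>B. \<Sum>p\<in>S. X p b) = (\<Sum>p\<in>S. \<Sum>b\<in>B. X p b)" by (rule sum.swap)
    have i2: "(\<Sum>b\<in>B. (\<Sum>p\<in>S. X p b) - delta (v b, b)) = (\<Sum>p\<in>S. \<Sum>b\<in>B. X p b) - (\<Sum>b\<in>B. delta (v b, b))"
      by (simp only: sum_subtractf sw)
    have "d - (\<Sum>b\<in>B. delta (v b, b)) =
       (\<Sum>p\<in>S. fscale (*) (d p) (delta p - (\<Sum>b\<in>B. fscale (*) (\<alpha> (snd p) b) (delta (fst p, b)))))
       + (\<Sum>b\<in>B. (\<Sum>p\<in>S. X p b) - delta (v b, b))"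
      unfolding i1 i2 by (simp add: algebra_simps)
    also have "\<dots> \<in> ?R" using t1 t2 by (intro vF.span_add vF.span_sum) auto
    finally show ?thesis .
  qed
  have claim2: "v b = 0" if b: "b \<in> B" for b
  proof (rule separate_eq[OF V vV])
    show "0 \<in> V" using V by (simp add: is_space_def)
    fix \<psi> assume \<psi>: "\<psi> \<in> dual sV V"
    have \<psi>0: "\<psi> 0 = 0" using \<psi> lin_zero[OF _ V] unfolding dual_iff by blast
    define \<Phi> where "\<Phi> = (\<lambda>(x::'v, y::'w). \<psi> x * \<phi> b y)"
    have lp: "linear_on sV V (*) UNIV \<psi>" using \<psi> unfolding dual_iff by blast
    have lf: "linear_on sW W (*) UNIV (\<phi> b)" using \<phi>(1)[OF b] unfolding dual_iff by blast
    have bil: "bilin_on sV V sW W \<Phi>"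
      unfolding bilin_on_def \<Phi>_def
      using lin_add[OF lp] lin_add[OF lf] lin_scale[OF lp] lin_scale[OF lf]
      by (simp add: algebra_simps)
    have kill: "killed \<Phi> (d - (\<Sum>b\<in>B. delta (v b, b)))"
      using fspan_killed[OF _ rel2_killed[OF bil]] claim1 fspan_span by blast
    define T where "T = S \<union> (\<lambda>b. (v b, b)) ` B"
    have fT: "finite T" unfolding T_def using fS fB by blast
    have supp: "{q. (d - (\<Sum>b\<in>B. delta (v b, b))) q \<noteq> 0} \<subseteq> T"
    proof
      fix q assume q: "q \<in> {q. (d - (\<Sum>b\<in>B. delta (v b, b))) q \<noteq> 0}"
      show "q \<in> T"
      proof (rule ccontr)
        assume "q \<notin> T"
        then have "d q = 0" "\<And>b. b \<in> B \<Longrightarrow> delta (v b, b) q = (0::'k)"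
          unfolding T_def using dS by (auto simp: delta_def)
        then show False using q by (simp add: fun_diff_def sum_fun_apply)
      qed
    qed
    have z: "(\<Sum>q\<in>T. (d - (\<Sum>b\<in>B. delta (v b, b))) q * \<Phi> q) = 0"
      using kill fT supp unfolding killed_def by blast
    have "(\<Sum>q\<in>T. (d - (\<Sum>b\<in>B. delta (v b, b))) q * \<Phi> q)
        = (\<Sum>q\<in>T. d q * \<Phi> q) - (\<Sum>q\<in>T. \<Sum>b'\<in>B. delta (v b', b') q * \<Phi> q)"
      by (simp add: fun_diff_def sum_fun_apply left_diff_distrib sum_subtractf sum_distrib_right)
    also have "(\<Sum>q\<in>T. \<Sum>b'\<in>B. delta (v b', b') q * \<Phi> q) = (\<Sum>b'\<in>B. \<Sum>q\<in>T. delta (v b', b') q * \<Phi> q)"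
      by (rule sum.swap)
    also have "\<dots> = (\<Sum>b'\<in>B. \<Phi> (v b', b'))"
      using fT unfolding T_def by (intro sum.cong refl sum_delta_mult) auto
    also have "\<dots> = (\<Sum>b'\<in>B. if b' = b then \<psi> (v b') else 0)"
      unfolding \<Phi>_def using \<phi>(2)[OF b] by (intro sum.cong) auto
    also have "\<dots> = \<psi> (v b)" using fB b by (simp add: sum.delta)
    also have "(\<Sum>q\<in>T. d q * \<Phi> q) = sum_list (map \<Phi> xs) - sum_list (map \<Phi> ys)"
    proof -
      have "set xs \<subseteq> T" "set ys \<subseteq> T" unfolding T_def S_def by auto
      then show ?thesis using free_sum[OF fT, of xs \<Phi>] free_sum[OF fT, of ys \<Phi>]
        unfolding d_def by (simp add: fun_diff_def left_diff_distrib sum_subtractf)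
    qed
    also have "\<dots> = 0" unfolding \<Phi>_def using pairs[OF \<psi> \<phi>(1)[OF b]] by simp
    finally show "\<psi> (v b) = \<psi> 0" using z \<psi>0 by simp
  qed
  have "(\<Sum>b\<in>B. delta (v b, b)) \<in> ?R"
    using claim2 R0[OF V W] BW by (intro vF.span_sum) auto
  then have "d - (\<Sum>b\<in>B. delta (v b, b)) + (\<Sum>b\<in>B. delta (v b, b)) \<in> ?R"
    using claim1 by (intro vF.span_add)
  then have "d \<in> ?R" by simp
  then show ?thesis unfolding teq2_def using xs ys fspan_span d_def by auto
qed



lemma CE_space:
  assumes "\<forall>x y. is_space s (Hom x y)"
  shows "is_space cscale (CE s Hom)"
proof -
  have add: "c + c' \<in> CE s Hom" if "c \<in> CE s Hom" "c' \<in> CE s Hom" for c c'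
  proof -
    have "(c + c') x y \<in> dual s (Hom x y)" for x y
      using that assms dual_add[of s "Hom x y" "c x y" "c' x y"] unfolding CE_def by auto
    moreover have "{(x, y). (c + c') x y \<noteq> 0} \<subseteq> {(x, y). c x y \<noteq> 0} \<union> {(x, y). c' x y \<noteq> 0}"
      by auto
    then have "finite {(x, y). (c + c') x y \<noteq> 0}"
      using that unfolding CE_def by (auto intro: finite_subset)
    ultimately show ?thesis unfolding CE_def by blast
  qed
  have sc: "cscale a c \<in> CE s Hom" if "c \<in> CE s Hom" for a c
  proof -
    have e: "cscale a c x y = fscale (*) a (c x y)" for x y by (simp add: cscale_def fscale_def)
    have "cscale a c x y \<in> dual s (Hom x y)" for x y
      unfolding e using that assms dual_fscale[of s "Hom x y" "c x y"] unfolding CE_def by auto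
    moreover have "{(x, y). cscale a c x y \<noteq> 0} \<subseteq> {(x, y). c x y \<noteq> 0}"
      by (auto simp: cscale_def fun_eq_iff)
    then have "finite {(x, y). cscale a c x y \<noteq> 0}"
      using that unfolding CE_def by (auto intro: finite_subset)
    ultimately show ?thesis unfolding CE_def by blast
  qed
  have z: "0 \<in> CE s Hom" unfolding CE_def using dual_zero by auto
  show ?thesis unfolding is_space_def using vs_cscale add sc z by blast
qed

lemma ev_lin: "linear_on cscale (CE s Hom) (*) UNIV (ev_id idm x)"
  unfolding linear_on_def ev_id_def by (simp add: cscale_def)

lemma gfun_lin:
  assumes C: "is_space cscale C" and N: "is_space sN N" and \<psi>: "\<psi> \<in> dual sN N"
    and \<phi>: "linear_on cscale C (*) UNIV \<phi>"
  shows "(\<lambda>c. if c \<in> C then fscale (*) (\<phi> c) \<psi> else 0) \<in> lin_maps cscale C (fscale (*)) (dual sN N)"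
  unfolding lin_maps_def linear_on_def
proof (intro CollectI conjI ballI allI impI)
  fix c assume "c \<in> C"
  then show "(if c \<in> C then fscale (*) (\<phi> c) \<psi> else 0) \<in> dual sN N"
    using dual_fscale[OF N \<psi>] by simp
next
  fix c c' assume cc: "c \<in> C" "c' \<in> C"
  then have "c + c' \<in> C" using C by (simp add: is_space_def)
  then show "(if c + c' \<in> C then fscale (*) (\<phi> (c + c')) \<psi> else 0) =
      (if c \<in> C then fscale (*) (\<phi> c) \<psi> else 0) + (if c' \<in> C then fscale (*) (\<phi> c') \<psi> else 0)"
    using cc lin_add[OF \<phi>] by (simp add: fscale_def fun_eq_iff algebra_simps)
next
  fix a c assume c: "c \<in> C"
  then have "cscale a c \<in> C" using C by (simp add: is_space_def)
  then show "(if cscale a c \<in> C then fscale (*) (\<phi> (cscale a c)) \<psi> else 0) =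
      fscale (*) a (if c \<in> C then fscale (*) (\<phi> c) \<psi> else 0)"
    using c lin_scale[OF \<phi>] by (simp add: fscale_def fun_eq_iff)
qed simp

lemma sum_list_scale_pairs:
  fixes \<Phi> :: "'n \<times> 'c \<Rightarrow> 'k::field"
  assumes "set l \<subseteq> N \<times> C" "\<And>m c. m \<in> N \<Longrightarrow> c \<in> C \<Longrightarrow> \<Phi> (sN a m, c) = a * \<Phi> (m, c)"
  shows "sum_list (map \<Phi> (map (\<lambda>(m, c). (sN a m, c)) l)) = a * sum_list (map \<Phi> l)"
  using assms(1)
proof (induct l)
  case (Cons p l)
  obtain m c where "p = (m, c)" by fastforce
  then show ?case using Cons assms(2) by (auto simp: distrib_left)
qed simp

lemma dual_pi_dual:
  assumes R: "rcomod s Hom cmp idm sN N nu" and C: "is_space cscale (CE s Hom)"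
    and g: "g \<in> lin_maps cscale (CE s Hom) (fscale (*)) (dual sN N)"
  shows "dual_pi N nu g \<in> dual sN N"
proof -
  have N: "is_space sN N" using R unfolding rcomod_def by blast
  have nuS: "\<And>n. n \<in> N \<Longrightarrow> set (nu n) \<subseteq> N \<times> CE s Hom" using R unfolding rcomod_def by blast
  have nuA: "\<And>a n n'. n \<in> N \<Longrightarrow> n' \<in> N \<Longrightarrow> teq2 sN N cscale (CE s Hom) (nu (sN a n + n'))
        (map (\<lambda>(m, c). (sN a m, c)) (nu n) @ nu n')"
    using R unfolding rcomod_def by blast
  have gl: "linear_on cscale (CE s Hom) (fscale (*)) (dual sN N) g" using g unfolding lin_maps_def by blast
  have gD: "\<And>c. c \<in> CE s Hom \<Longrightarrow> g c \<in> dual sN N" using lin_in[OF gl] .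
  define \<Phi> where "\<Phi> = (\<lambda>(m, c). g c m)"
  have bil: "bilin_on sN N cscale (CE s Hom) \<Phi>"
    unfolding bilin_on_def \<Phi>_def
    using gD lin_add[OF gl] lin_scale[OF gl] by (auto simp: dual_iff linear_on_def fscale_def)
  define \<pi> where "\<pi> n = sum_list (map \<Phi> (nu n))" for n
  have key: "\<pi> (sN a n + n') = a * \<pi> n + \<pi> n'" if "n \<in> N" "n' \<in> N" for a n n'
  proof -
    have "\<pi> (sN a n + n') = sum_list (map \<Phi> (map (\<lambda>(m, c). (sN a m, c)) (nu n) @ nu n'))"
      unfolding \<pi>_def using teq2_pair[OF nuA[OF that] bil] .
    also have "\<dots> = a * \<pi> n + \<pi> n'"
      unfolding \<pi>_def using sum_list_scale_pairs[OF nuS[OF that(1)], of \<Phi> sN a] bil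
      unfolding bilin_on_def by simp
    finally show ?thesis .
  qed
  have one: "sN 1 x = x" for x using N unfolding is_space_def vs_axioms_def by blast
  have z: "0 \<in> N" using N unfolding is_space_def by blast
  have p0: "\<pi> 0 = 0"
  proof -
    have "\<pi> (sN 1 0 + 0) = 1 * \<pi> 0 + \<pi> 0" using key[OF z z] .
    then have "\<pi> 0 = \<pi> 0 + \<pi> 0" by (simp only: one add_0_right mult_1)
    then show ?thesis by (metis add_cancel_right_right)
  qed
  have dp: "dual_pi N nu g n = (if n \<in> N then \<pi> n else 0)" for n
    unfolding dual_pi_def \<pi>_def \<Phi>_def by simp
  show ?thesis unfolding dual_iff linear_on_def
  proof (intro conjI ballI allI impI)
    fix x y assume "x \<in> N" "y \<in> N"
    then show "dual_pi N nu g (x + y) = dual_pi N nu g x + dual_pi N nu g y"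
      using key[of x y 1] N by (simp add: dp one is_space_def)
  next
    fix a x assume "x \<in> N"
    then show "dual_pi N nu g (sN a x) = a * dual_pi N nu g x"
      using key[of x 0 a] N z p0 by (simp add: dp is_space_def)
  qed (simp_all add: dual_pi_def)
qed



lemma bil_g:
  assumes g: "g \<in> lin_maps cscale (CE s Hom) (fscale (*)) (dual sN N)"
  shows "bilin_on sN N cscale (CE s Hom) (\<lambda>(m, c). g c m)"
proof -
  have gl: "linear_on cscale (CE s Hom) (fscale (*)) (dual sN N) g" using g unfolding lin_maps_def by blast
  have gD: "\<And>c. c \<in> CE s Hom \<Longrightarrow> g c \<in> dual sN N" using lin_in[OF gl] .
  show ?thesis unfolding bilin_on_def
    using gD lin_add[OF gl] lin_scale[OF gl] by (auto simp: dual_iff linear_on_def fscale_def)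
qed

lemma sum_list_map_pair:
  "sum_list (map (\<lambda>(n, c). g c n) (map (\<lambda>(m', c). (f m', c)) l)) = sum_list (map (\<lambda>(m', c). g c (f m')) l)"
  by (induct l) auto

lemma dualmap_contra:
  assumes K: "\<forall>x y. is_space s (Hom x y)" and RM: "rcomod s Hom cmp idm sM M nuM"
    and RN: "rcomod s Hom cmp idm sN N nuN"
    and f: "f \<in> comod_hom s Hom sM M nuM sN N nuN"
  shows "dualmap sN N M f \<in> contra_hom s Hom (fscale (*)) (dual sN N) (dual_pi N nuN)
                             (fscale (*)) (dual sM M) (dual_pi M nuM)"
proof -
  have C: "is_space cscale (CE s Hom)" using CE_space[OF K] .
  have M: "is_space sM M" using RM unfolding rcomod_def by blast
  have N: "is_space sN N" using RN unfolding rcomod_def by blast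
  have nuMS: "\<And>n. n \<in> M \<Longrightarrow> set (nuM n) \<subseteq> M \<times> CE s Hom" using RM unfolding rcomod_def by blast
  have fl: "linear_on sM M sN N f" and fT: "\<And>m. m \<in> M \<Longrightarrow> teq2 sN N cscale (CE s Hom) (nuN (f m))
        (map (\<lambda>(m', c). (f m', c)) (nuM m))"
    using f unfolding comod_hom_def lin_maps_def by auto
  let ?F = "dualmap sN N M f"
  have Fe: "?F \<psi> = (\<lambda>m. if m \<in> M then \<psi> (f m) else 0)" if "\<psi> \<in> dual sN N" for \<psi>
    using that by (simp add: dualmap_def)
  have FD: "(\<lambda>m. if m \<in> M then \<psi> (f m) else 0) \<in> dual sM M" if \<psi>: "\<psi> \<in> dual sN N" for \<psi>
  proof -
    have pl: "linear_on sN N (*) UNIV \<psi>" using \<psi> unfolding dual_iff by blast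
    show ?thesis unfolding dual_iff linear_on_def
      using M lin_add[OF fl] lin_scale[OF fl] lin_in[OF fl] lin_add[OF pl] lin_scale[OF pl]
      by (simp add: is_space_def)
  qed
  have Flin: "linear_on (fscale (*)) (dual sN N) (fscale (*)) (dual sM M) ?F"
    unfolding linear_on_def
  proof (intro conjI ballI allI)
    fix \<psi> assume "\<psi> \<in> dual sN N"
    then show "?F \<psi> \<in> dual sM M" using Fe FD by simp
  next
    fix \<psi> \<psi>' assume a: "\<psi> \<in> dual sN N" "\<psi>' \<in> dual sN N"
    then have "\<psi> + \<psi>' \<in> dual sN N" using dual_add[OF N] by blast
    then show "?F (\<psi> + \<psi>') = ?F \<psi> + ?F \<psi>'" using a Fe by (simp add: fun_eq_iff)
  next
    fix a \<psi> assume a: "\<psi> \<in> dual sN N"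
    then have "fscale (*) a \<psi> \<in> dual sN N" using dual_fscale[OF N] by blast
    then show "?F (fscale (*) a \<psi>) = fscale (*) a (?F \<psi>)" using a Fe by (simp add: fun_eq_iff fscale_def)
  qed
  have Fz: "\<forall>\<psi>. \<psi> \<notin> dual sN N \<longrightarrow> ?F \<psi> = 0" by (simp add: dualmap_def)
  have comm: "?F (dual_pi N nuN g) = dual_pi M nuM (?F \<circ> g)"
    if g: "g \<in> lin_maps cscale (CE s Hom) (fscale (*)) (dual sN N)" for g
  proof
    fix m
    have gl: "linear_on cscale (CE s Hom) (fscale (*)) (dual sN N) g" using g unfolding lin_maps_def by blast
    have pd: "dual_pi N nuN g \<in> dual sN N" using dual_pi_dual[OF RN C g] .
    show "?F (dual_pi N nuN g) m = dual_pi M nuM (?F \<circ> g) m"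
    proof (cases "m \<in> M")
      case True
      have fmN: "f m \<in> N" using lin_in[OF fl True] .
      have "?F (dual_pi N nuN g) m = sum_list (map (\<lambda>(n, c). g c n) (nuN (f m)))"
        using Fe[OF pd] True fmN by (simp add: dual_pi_def)
      also have "\<dots> = sum_list (map (\<lambda>(n, c). g c n) (map (\<lambda>(m', c). (f m', c)) (nuM m)))"
        using teq2_pair[OF fT[OF True] bil_g[OF g]] .
      also have "\<dots> = sum_list (map (\<lambda>(m', c). g c (f m')) (nuM m))" by (rule sum_list_map_pair)
      also have "\<dots> = sum_list (map (\<lambda>(m', c). (?F \<circ> g) c m') (nuM m))"
      proof (intro arg_cong[where f=sum_list] map_cong refl)
        fix p assume "p \<in> set (nuM m)"
        then obtain m' c where p: "p = (m', c)" "m' \<in> M" "c \<in> CE s Hom" using nuMS[OF True] by force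
        then have "g c \<in> dual sN N" using lin_in[OF gl] by blast
        then show "(\<lambda>(m', c). g c (f m')) p = (\<lambda>(m', c). (?F \<circ> g) c m') p"
          using p Fe by simp
      qed
      also have "\<dots> = dual_pi M nuM (?F \<circ> g) m" using True by (simp add: dual_pi_def)
      finally show ?thesis .
    next
      case False
      then show ?thesis using Fe[OF pd] by (simp add: dual_pi_def)
    qed
  qed
  have "?F \<in> lin_maps (fscale (*)) (dual sN N) (fscale (*)) (dual sM M)"
    unfolding lin_maps_def using Flin Fz by blast
  then show ?thesis unfolding contra_hom_def using comm by blast
qed



definition gx :: "('k::field \<Rightarrow> 'h::ab_group_add \<Rightarrow> 'h) \<Rightarrow> ('o \<Rightarrow> 'o \<Rightarrow> 'h set) \<Rightarrow> ('o \<Rightarrow> 'h) \<Rightarrow> 'o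
   \<Rightarrow> ('n \<Rightarrow> 'k) \<Rightarrow> ('o \<Rightarrow> 'o \<Rightarrow> 'h \<Rightarrow> 'k) \<Rightarrow> 'n \<Rightarrow> 'k" where
  "gx s Hom idm x \<psi> = (\<lambda>c. if c \<in> CE s Hom then fscale (*) (ev_id idm x c) \<psi> else 0)"

lemma gx_lin:
  assumes C: "is_space cscale (CE s Hom)" and N: "is_space sN N" and \<psi>: "\<psi> \<in> dual sN N"
  shows "gx s Hom idm x \<psi> \<in> lin_maps cscale (CE s Hom) (fscale (*)) (dual sN N)"
  unfolding gx_def by (rule gfun_lin[OF C N \<psi> ev_lin])

lemma ex_eq:
  assumes R: "rcomod s Hom cmp idm sN N nu" and \<psi>: "\<psi> \<in> dual sN N"
  shows "dual_pi N nu (gx s Hom idm x \<psi>) = (\<lambda>n. if n \<in> N then \<psi> (coact sN nu (ev_id idm x) n) else 0)"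
proof
  fix n
  have N: "is_space sN N" using R unfolding rcomod_def by blast
  have nuS: "\<And>n. n \<in> N \<Longrightarrow> set (nu n) \<subseteq> N \<times> CE s Hom" using R unfolding rcomod_def by blast
  have pl: "linear_on sN N (*) UNIV \<psi>" using \<psi> unfolding dual_iff by blast
  show "dual_pi N nu (gx s Hom idm x \<psi>) n = (if n \<in> N then \<psi> (coact sN nu (ev_id idm x) n) else 0)"
  proof (cases "n \<in> N")
    case True
    have "sum_list (map (\<lambda>(m, c). gx s Hom idm x \<psi> c m) (nu n))
        = sum_list (map (\<lambda>(m, c). ev_id idm x c * \<psi> m) (nu n))"
      using nuS[OF True] by (intro arg_cong[where f=sum_list] map_cong refl)
        (auto simp: gx_def fscale_def)
    also have "\<dots> = \<psi> (coact sN nu (ev_id idm x) n)"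
      unfolding coact_def using fun_lin_sum_list[OF pl N nuS[OF True]] by simp
    finally show ?thesis using True by (simp add: dual_pi_def)
  qed (simp add: dual_pi_def)
qed

lemma F_ex:
  assumes K: "\<forall>x y. is_space s (Hom x y)" and RM: "rcomod s Hom cmp idm sM M nuM"
    and RN: "rcomod s Hom cmp idm sN N nuN"
    and F: "F \<in> contra_hom s Hom (fscale (*)) (dual sN N) (dual_pi N nuN) (fscale (*)) (dual sM M) (dual_pi M nuM)"
    and \<psi>: "\<psi> \<in> dual sN N" and m: "m \<in> M"
  shows "F (dual_pi N nuN (gx s Hom idm x \<psi>)) m = F \<psi> (coact sM nuM (ev_id idm x) m)"
proof -
  have C: "is_space cscale (CE s Hom)" using CE_space[OF K] .
  have M: "is_space sM M" using RM unfolding rcomod_def by blast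
  have N: "is_space sN N" using RN unfolding rcomod_def by blast
  have nuMS: "\<And>n. n \<in> M \<Longrightarrow> set (nuM n) \<subseteq> M \<times> CE s Hom" using RM unfolding rcomod_def by blast
  have Fl: "linear_on (fscale (*)) (dual sN N) (fscale (*)) (dual sM M) F"
    and Fc: "\<And>g. g \<in> lin_maps cscale (CE s Hom) (fscale (*)) (dual sN N) \<Longrightarrow>
       F (dual_pi N nuN g) = dual_pi M nuM (F \<circ> g)"
    using F unfolding contra_hom_def lin_maps_def by auto
  have F\<psi>: "F \<psi> \<in> dual sM M" using lin_in[OF Fl \<psi>] .
  have pl: "linear_on sM M (*) UNIV (F \<psi>)" using F\<psi> unfolding dual_iff by blast
  have "F (dual_pi N nuN (gx s Hom idm x \<psi>)) m = dual_pi M nuM (F \<circ> gx s Hom idm x \<psi>) m"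
    using Fc[OF gx_lin[OF C N \<psi>]] by simp
  also have "\<dots> = sum_list (map (\<lambda>(m', c). F (gx s Hom idm x \<psi> c) m') (nuM m))"
    using m by (simp add: dual_pi_def)
  also have "\<dots> = sum_list (map (\<lambda>(m', c). ev_id idm x c * F \<psi> m') (nuM m))"
  proof (intro arg_cong[where f=sum_list] map_cong refl)
    fix p assume "p \<in> set (nuM m)"
    then obtain m' c where p: "p = (m', c)" "c \<in> CE s Hom" using nuMS[OF m] by force
    have "F (fscale (*) (ev_id idm x c) \<psi>) = fscale (*) (ev_id idm x c) (F \<psi>)"
      using lin_scale[OF Fl \<psi>] .
    then show "(\<lambda>(m', c). F (gx s Hom idm x \<psi> c) m') p = (\<lambda>(m', c). ev_id idm x c * F \<psi> m') p"
      using p by (simp add: gx_def fscale_def)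
  qed
  also have "\<dots> = F \<psi> (coact sM nuM (ev_id idm x) m)"
    unfolding coact_def using fun_lin_sum_list[OF pl M nuMS[OF m]] by simp
  finally show ?thesis .
qed

lemma decomp:
  assumes R: "rcomod s Hom cmp idm sM M nuM" and m: "m \<in> M"
  shows "\<exists>X. finite X \<and> m = (\<Sum>x\<in>X. coact sM nuM (ev_id idm x) m)"
proof -
  have M: "is_space sM M" using R unfolding rcomod_def by blast
  interpret vM: vector_space sM using is_space_vs[OF M] .
  have nuMS: "set (nuM m) \<subseteq> M \<times> CE s Hom" using R m unfolding rcomod_def by blast
  have cu: "coact sM nuM (counit idm) m = m" using R m unfolding rcomod_def by blast
  have fd: "finite {x. c x x \<noteq> 0}" if "c \<in> CE s Hom" for c
  proof -
    have "finite {(x, y). c x y \<noteq> 0}" using that unfolding CE_def by blast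
    then have "finite (fst ` {(x, y). c x y \<noteq> 0})" by blast
    moreover have "{x. c x x \<noteq> 0} \<subseteq> fst ` {(x, y). c x y \<noteq> 0}" by force
    ultimately show ?thesis using finite_subset by blast
  qed
  define X where "X = (\<Union>p\<in>set (nuM m). {x. snd p x x \<noteq> 0})"
  have fX: "finite X" unfolding X_def using nuMS fd by auto
  have cuX: "counit idm c = (\<Sum>x\<in>X. ev_id idm x c)" if "(m', c) \<in> set (nuM m)" for m' c
  proof -
    have "{x. c x x \<noteq> 0} \<subseteq> X" unfolding X_def using that by force
    then show ?thesis unfolding counit_def ev_id_def
      using fX by (intro sum.mono_neutral_left) auto
  qed
  have "m = sum_list (map (\<lambda>(m', c). sM (counit idm c) m') (nuM m))"
    using cu unfolding coact_def by simp
  also have "\<dots> = sum_list (map (\<lambda>p. \<Sum>x\<in>X. (\<lambda>(m', c). sM (ev_id idm x c) m') p) (nuM m))"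
  proof (intro arg_cong[where f=sum_list] map_cong refl)
    fix p assume p: "p \<in> set (nuM m)"
    obtain m' c where "p = (m', c)" by fastforce
    then show "(\<lambda>(m', c). sM (counit idm c) m') p = (\<Sum>x\<in>X. (\<lambda>(m', c). sM (ev_id idm x c) m') p)"
      using cuX p by (simp add: vM.scale_sum_left)
  qed
  also have "\<dots> = (\<Sum>x\<in>X. coact sM nuM (ev_id idm x) m)"
    unfolding coact_def by (rule sum_list_sum_swap)
  finally show ?thesis using fX by blast
qed



lemma contra_rep:
  assumes K: "\<forall>x y. is_space s (Hom x y)" and RM: "rcomod s Hom cmp idm sM M nuM"
    and LN: "lf_rcomod s Hom cmp idm sN N nuN"
    and F: "F \<in> contra_hom s Hom (fscale (*)) (dual sN N) (dual_pi N nuN) (fscale (*)) (dual sM M) (dual_pi M nuM)"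
    and m: "m \<in> M"
  shows "\<exists>n\<in>N. \<forall>\<psi>\<in>dual sN N. F \<psi> m = \<psi> n"
proof -
  have RN: "rcomod s Hom cmp idm sN N nuN" using LN unfolding lf_rcomod_def by blast
  have M: "is_space sM M" using RM unfolding rcomod_def by blast
  have N: "is_space sN N" using RN unfolding rcomod_def by blast
  have nuMS: "set (nuM m) \<subseteq> M \<times> CE s Hom" using RM m unfolding rcomod_def by blast
  have nuNS: "\<And>n. n \<in> N \<Longrightarrow> set (nuN n) \<subseteq> N \<times> CE s Hom" using RN unfolding rcomod_def by blast
  have Fl: "linear_on (fscale (*)) (dual sN N) (fscale (*)) (dual sM M) F"
    using F unfolding contra_hom_def lin_maps_def by auto
  obtain X where X: "finite X" "m = (\<Sum>x\<in>X. coact sM nuM (ev_id idm x) m)"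
    using decomp[OF RM m] by blast
  have exM: "coact sM nuM (ev_id idm x) m \<in> M" for x
    unfolding coact_def using sum_list_in[OF M nuMS] .
  have exN: "coact sN nuN (ev_id idm x) n \<in> N" if "n \<in> N" for x n
    unfolding coact_def using sum_list_in[OF N nuNS[OF that]] .
  have Fsum: "F \<psi> m = (\<Sum>x\<in>X. F (dual_pi N nuN (gx s Hom idm x \<psi>)) m)" if \<psi>: "\<psi> \<in> dual sN N" for \<psi>
  proof -
    have F\<psi>: "linear_on sM M (*) UNIV (F \<psi>)" using lin_in[OF Fl \<psi>] unfolding dual_iff by blast
    have "F \<psi> m = F \<psi> (\<Sum>x\<in>X. coact sM nuM (ev_id idm x) m)" by (rule arg_cong[OF X(2)])
    also have "\<dots> = (\<Sum>x\<in>X. F \<psi> (coact sM nuM (ev_id idm x) m))"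
      by (rule lin_sum[OF F\<psi> M], rule exM)
    also have "\<dots> = (\<Sum>x\<in>X. F (dual_pi N nuN (gx s Hom idm x \<psi>)) m)"
      using F_ex[OF K RM RN F \<psi> m] by simp
    finally show ?thesis .
  qed
  have "\<forall>x. fin_dim sN (coact sN nuN (ev_id idm x) ` N)" using LN unfolding lf_rcomod_def by blast
  then have "\<forall>x. \<exists>B. finite B \<and> B \<subseteq> coact sN nuN (ev_id idm x) ` N \<and>
      coact sN nuN (ev_id idm x) ` N = lin_span sN B" unfolding fin_dim_def by blast
  then have "\<exists>Bf. \<forall>x. finite (Bf x) \<and> Bf x \<subseteq> coact sN nuN (ev_id idm x) ` N \<and>
      coact sN nuN (ev_id idm x) ` N = lin_span sN (Bf x)" by (rule choice)
  then obtain Bf where Bf0: "\<forall>x. finite (Bf x) \<and> Bf x \<subseteq> coact sN nuN (ev_id idm x) ` N \<and>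
      coact sN nuN (ev_id idm x) ` N = lin_span sN (Bf x)" by blast
  have Bf: "\<And>x. finite (Bf x)" "\<And>x. Bf x \<subseteq> coact sN nuN (ev_id idm x) ` N"
    "\<And>x. coact sN nuN (ev_id idm x) ` N = lin_span sN (Bf x)" using Bf0 by auto
  define B0 where "B0 = (\<Union>x\<in>X. Bf x)"
  have fB0: "finite B0" unfolding B0_def using X(1) Bf(1) by blast
  have BfN: "Bf x \<subseteq> N" for x using Bf(2)[of x] exN by blast
  have B0N: "B0 \<subseteq> N" unfolding B0_def using BfN by blast
  show ?thesis
  proof (rule represent[OF N fB0 B0N])
    fix \<psi> \<psi>' assume \<psi>: "\<psi> \<in> dual sN N" and \<psi>': "\<psi>' \<in> dual sN N" and ag: "\<forall>b\<in>B0. \<psi> b = \<psi>' b"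
    have pl: "linear_on sN N (*) UNIV \<psi>" using \<psi> unfolding dual_iff by blast
    have pl': "linear_on sN N (*) UNIV \<psi>'" using \<psi>' unfolding dual_iff by blast
    have "dual_pi N nuN (gx s Hom idm x \<psi>) = dual_pi N nuN (gx s Hom idm x \<psi>')" if x: "x \<in> X" for x
    proof -
      have "\<psi> (coact sN nuN (ev_id idm x) n) = \<psi>' (coact sN nuN (ev_id idm x) n)" if n: "n \<in> N" for n
      proof -
        have "coact sN nuN (ev_id idm x) n \<in> lin_span sN (Bf x)" using Bf(3)[of x] n by blast
        then obtain a where a: "coact sN nuN (ev_id idm x) n = (\<Sum>b\<in>Bf x. sN (a b) b)"
          unfolding lin_span_def by blast
        have "\<psi> (\<Sum>b\<in>Bf x. sN (a b) b) = (\<Sum>b\<in>Bf x. a b * \<psi> b)"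
          by (rule fun_lin_sum[OF pl N]) (use BfN in blast)
        also have "\<dots> = (\<Sum>b\<in>Bf x. a b * \<psi>' b)" using ag x unfolding B0_def by auto
        also have "\<dots> = \<psi>' (\<Sum>b\<in>Bf x. sN (a b) b)"
          by (rule fun_lin_sum[OF pl' N, symmetric]) (use BfN in blast)
        finally show ?thesis using a by simp
      qed
      then show ?thesis unfolding ex_eq[OF RN \<psi>] ex_eq[OF RN \<psi>'] by (intro ext) simp
    qed
    then show "F \<psi> m = F \<psi>' m" using Fsum[OF \<psi>] Fsum[OF \<psi>'] by simp
  next
    fix \<psi> \<psi>' a assume \<psi>: "\<psi> \<in> dual sN N" and \<psi>': "\<psi>' \<in> dual sN N"
    have "fscale (*) a \<psi> \<in> dual sN N" using dual_fscale[OF N \<psi>] .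
    then have "F (fscale (*) a \<psi> + \<psi>') = F (fscale (*) a \<psi>) + F \<psi>'" using lin_add[OF Fl _ \<psi>'] by blast
    also have "\<dots> = fscale (*) a (F \<psi>) + F \<psi>'" using lin_scale[OF Fl \<psi>] by simp
    finally show "F (fscale (*) a \<psi> + \<psi>') m = a * F \<psi> m + F \<psi>' m" by (simp add: fscale_def)
  qed
qed



lemma sum_list_map_pair2:
  "sum_list (map (\<lambda>(v, w). \<psi> v * \<phi> w) (map (\<lambda>(m', c). (f m', c)) l))
     = sum_list (map (\<lambda>(m', c). \<psi> (f m') * \<phi> c) l)"
  by (induct l) auto

theorem proposition5p1:
  fixes s :: "'k::field \<Rightarrow> 'h::ab_group_add \<Rightarrow> 'h"
    and Hom :: "'o \<Rightarrow> 'o \<Rightarrow> 'h set"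
    and cmp :: "'o \<Rightarrow> 'o \<Rightarrow> 'o \<Rightarrow> 'h \<Rightarrow> 'h \<Rightarrow> 'h"
    and idm :: "'o \<Rightarrow> 'h"
    and sM :: "'k \<Rightarrow> 'm::ab_group_add \<Rightarrow> 'm" and M :: "'m set"
    and nuM :: "'m \<Rightarrow> ('m \<times> ('o \<Rightarrow> 'o \<Rightarrow> 'h \<Rightarrow> 'k)) list"
    and sN :: "'k \<Rightarrow> 'n::ab_group_add \<Rightarrow> 'n" and N :: "'n set"
    and nuN :: "'n \<Rightarrow> ('n \<times> ('o \<Rightarrow> 'o \<Rightarrow> 'h \<Rightarrow> 'k)) list"
  assumes "klin_cat s Hom cmp idm"
    and "loc_fin_cat s Hom"
    and "lf_rcomod s Hom cmp idm sM M nuM"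
    and "lf_rcomod s Hom cmp idm sN N nuN"
  shows "bij_betw (dualmap sN N M)
           (comod_hom s Hom sM M nuM sN N nuN)
           (contra_hom s Hom (fscale (*)) (dual sN N) (dual_pi N nuN)
                             (fscale (*)) (dual sM M) (dual_pi M nuM))"
proof -
  have K: "\<forall>x y. is_space s (Hom x y)" using assms(1) unfolding klin_cat_def by (rule conjunct1)
  have RM: "rcomod s Hom cmp idm sM M nuM" using assms(3) unfolding lf_rcomod_def by blast
  have RN: "rcomod s Hom cmp idm sN N nuN" using assms(4) unfolding lf_rcomod_def by blast
  have C: "is_space cscale (CE s Hom)" using CE_space[OF K] .
  have M: "is_space sM M" using RM unfolding rcomod_def by blast
  have N: "is_space sN N" using RN unfolding rcomod_def by blast
  have nuMS: "\<And>n. n \<in> M \<Longrightarrow> set (nuM n) \<subseteq> M \<times> CE s Hom" using RM unfolding rcomod_def by blast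
  have nuNS: "\<And>n. n \<in> N \<Longrightarrow> set (nuN n) \<subseteq> N \<times> CE s Hom" using RN unfolding rcomod_def by blast
  let ?H = "comod_hom s Hom sM M nuM sN N nuN"
  let ?P = "contra_hom s Hom (fscale (*)) (dual sN N) (dual_pi N nuN) (fscale (*)) (dual sM M) (dual_pi M nuM)"
  have inj: "inj_on (dualmap sN N M) ?H"
  proof (rule inj_onI)
    fix f f' assume f: "f \<in> ?H" and f': "f' \<in> ?H" and eq: "dualmap sN N M f = dualmap sN N M f'"
    have fl: "linear_on sM M sN N f" "\<forall>x. x \<notin> M \<longrightarrow> f x = 0" using f unfolding comod_hom_def lin_maps_def by auto
    have fl': "linear_on sM M sN N f'" "\<forall>x. x \<notin> M \<longrightarrow> f' x = 0" using f' unfolding comod_hom_def lin_maps_def by auto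
    show "f = f'"
    proof
      fix m
      show "f m = f' m"
      proof (cases "m \<in> M")
        case True
        show ?thesis
        proof (rule separate_eq[OF N lin_in[OF fl(1) True] lin_in[OF fl'(1) True]])
          fix \<psi> assume \<psi>: "\<psi> \<in> dual sN N"
          have "dualmap sN N M f \<psi> m = dualmap sN N M f' \<psi> m" using eq by simp
          then show "\<psi> (f m) = \<psi> (f' m)" using \<psi> True by (simp add: dualmap_def)
        qed
      next
        case False
        then show ?thesis using fl(2) fl'(2) by simp
      qed
    qed
  qed
  have sub: "dualmap sN N M ` ?H \<subseteq> ?P"
    using dualmap_contra[OF K RM RN] by blast
  have sup: "?P \<subseteq> dualmap sN N M ` ?H"
  proof
    fix F assume F: "F \<in> ?P"
    have Fl: "linear_on (fscale (*)) (dual sN N) (fscale (*)) (dual sM M) F"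
      and Fz: "\<forall>\<psi>. \<psi> \<notin> dual sN N \<longrightarrow> F \<psi> = 0"
      and Fc: "\<And>g. g \<in> lin_maps cscale (CE s Hom) (fscale (*)) (dual sN N) \<Longrightarrow>
        F (dual_pi N nuN g) = dual_pi M nuM (F \<circ> g)"
      using F unfolding contra_hom_def lin_maps_def by auto
    have FD: "\<And>\<psi>. \<psi> \<in> dual sN N \<Longrightarrow> F \<psi> \<in> dual sM M" using lin_in[OF Fl] .
    have FL: "\<And>\<psi>. \<psi> \<in> dual sN N \<Longrightarrow> linear_on sM M (*) UNIV (F \<psi>)" using FD unfolding dual_iff by blast
    define f where "f m = (if m \<in> M then (SOME n. n \<in> N \<and> (\<forall>\<psi>\<in>dual sN N. F \<psi> m = \<psi> n)) else 0)" for m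
    have fp: "f m \<in> N \<and> (\<forall>\<psi>\<in>dual sN N. F \<psi> m = \<psi> (f m))" if m: "m \<in> M" for m
    proof -
      have "\<exists>n. n \<in> N \<and> (\<forall>\<psi>\<in>dual sN N. F \<psi> m = \<psi> n)"
        using contra_rep[OF K RM assms(4) F m] by blast
      note ex = this
      have fe: "f m = (SOME n. n \<in> N \<and> (\<forall>\<psi>\<in>dual sN N. F \<psi> m = \<psi> n))"
        using m unfolding f_def by simp
      show ?thesis unfolding fe by (rule someI_ex[OF ex])
    qed
    have fN: "\<And>m. m \<in> M \<Longrightarrow> f m \<in> N" using fp by blast
    have fF: "\<And>m \<psi>. m \<in> M \<Longrightarrow> \<psi> \<in> dual sN N \<Longrightarrow> F \<psi> m = \<psi> (f m)" using fp by blast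
    have flin: "linear_on sM M sN N f"
      unfolding linear_on_def
    proof (intro conjI ballI allI)
      fix x assume "x \<in> M" then show "f x \<in> N" by (rule fN)
    next
      fix x y assume xy: "x \<in> M" "y \<in> M"
      then have xyM: "x + y \<in> M" using M by (simp add: is_space_def)
      have sN': "f x + f y \<in> N" using fN[OF xy(1)] fN[OF xy(2)] N by (simp add: is_space_def)
      show "f (x + y) = f x + f y"
      proof (rule separate_eq[OF N fN[OF xyM] sN'])
        fix \<psi> assume \<psi>: "\<psi> \<in> dual sN N"
        have pl: "linear_on sN N (*) UNIV \<psi>" using \<psi> unfolding dual_iff by blast
        have "\<psi> (f (x + y)) = F \<psi> (x + y)" using fF[OF xyM \<psi>] by simp
        also have "\<dots> = F \<psi> x + F \<psi> y" using lin_add[OF FL[OF \<psi>] xy] .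
        also have "\<dots> = \<psi> (f x) + \<psi> (f y)" using fF[OF _ \<psi>] xy by simp
        also have "\<dots> = \<psi> (f x + f y)" using lin_add[OF pl fN[OF xy(1)] fN[OF xy(2)]] by simp
        finally show "\<psi> (f (x + y)) = \<psi> (f x + f y)" .
      qed
    next
      fix a x assume x: "x \<in> M"
      then have axM: "sM a x \<in> M" using M by (simp add: is_space_def)
      have sN': "sN a (f x) \<in> N" using fN[OF x] N by (simp add: is_space_def)
      show "f (sM a x) = sN a (f x)"
      proof (rule separate_eq[OF N fN[OF axM] sN'])
        fix \<psi> assume \<psi>: "\<psi> \<in> dual sN N"
        have pl: "linear_on sN N (*) UNIV \<psi>" using \<psi> unfolding dual_iff by blast
        have "\<psi> (f (sM a x)) = F \<psi> (sM a x)" using fF[OF axM \<psi>] by simp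
        also have "\<dots> = a * F \<psi> x" using lin_scale[OF FL[OF \<psi>] x] .
        also have "\<dots> = a * \<psi> (f x)" using fF[OF x \<psi>] by simp
        also have "\<dots> = \<psi> (sN a (f x))" using lin_scale[OF pl fN[OF x]] by simp
        finally show "\<psi> (f (sM a x)) = \<psi> (sN a (f x))" .
      qed
    qed
    have fz: "\<forall>x. x \<notin> M \<longrightarrow> f x = 0" unfolding f_def by simp
    have fteq: "teq2 sN N cscale (CE s Hom) (nuN (f m)) (map (\<lambda>(m', c). (f m', c)) (nuM m))"
      if m: "m \<in> M" for m
    proof (rule teq2_from_pairs[OF N C])
      show "set (nuN (f m)) \<subseteq> N \<times> CE s Hom" using nuNS[OF fN[OF m]] .
      show "set (map (\<lambda>(m', c). (f m', c)) (nuM m)) \<subseteq> N \<times> CE s Hom" using nuMS[OF m] fN by auto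
      fix \<psi> \<phi> assume \<psi>: "\<psi> \<in> dual sN N" and \<phi>: "\<phi> \<in> dual cscale (CE s Hom)"
      define g where "g = (\<lambda>c. if c \<in> CE s Hom then fscale (*) (\<phi> c) \<psi> else 0)"
      have gL: "g \<in> lin_maps cscale (CE s Hom) (fscale (*)) (dual sN N)"
        unfolding g_def using gfun_lin[OF C N \<psi>] \<phi> unfolding dual_iff by blast
      have pd: "dual_pi N nuN g \<in> dual sN N" using dual_pi_dual[OF RN C gL] .
      have "sum_list (map (\<lambda>(v, w). \<psi> v * \<phi> w) (nuN (f m))) = sum_list (map (\<lambda>(v, w). g w v) (nuN (f m)))"
        using nuNS[OF fN[OF m]] by (intro arg_cong[where f=sum_list] map_cong refl)
          (auto simp: g_def fscale_def mult.commute)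
      also have "\<dots> = dual_pi N nuN g (f m)" using fN[OF m] by (simp add: dual_pi_def)
      also have "\<dots> = F (dual_pi N nuN g) m" using fF[OF m pd] by simp
      also have "\<dots> = dual_pi M nuM (F \<circ> g) m" using Fc[OF gL] by simp
      also have "\<dots> = sum_list (map (\<lambda>(m', c). F (g c) m') (nuM m))" using m by (simp add: dual_pi_def)
      also have "\<dots> = sum_list (map (\<lambda>(m', c). \<psi> (f m') * \<phi> c) (nuM m))"
      proof (intro arg_cong[where f=sum_list] map_cong refl)
        fix p assume "p \<in> set (nuM m)"
        then obtain m' c where p: "p = (m', c)" "m' \<in> M" "c \<in> CE s Hom" using nuMS[OF m] by force
        have "F (fscale (*) (\<phi> c) \<psi>) = fscale (*) (\<phi> c) (F \<psi>)" using lin_scale[OF Fl \<psi>] .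
        then show "(\<lambda>(m', c). F (g c) m') p = (\<lambda>(m', c). \<psi> (f m') * \<phi> c) p"
          using p fF[OF p(2) \<psi>] by (simp add: g_def fscale_def mult.commute)
      qed
      also have "\<dots> = sum_list (map (\<lambda>(v, w). \<psi> v * \<phi> w) (map (\<lambda>(m', c). (f m', c)) (nuM m)))"
        by (rule sum_list_map_pair2[symmetric])
      finally show "sum_list (map (\<lambda>(v, w). \<psi> v * \<phi> w) (nuN (f m))) =
          sum_list (map (\<lambda>(v, w). \<psi> v * \<phi> w) (map (\<lambda>(m', c). (f m', c)) (nuM m)))" .
    qed
    have fH: "f \<in> ?H" unfolding comod_hom_def lin_maps_def using flin fz fteq by blast
    have "dualmap sN N M f = F"
    proof
      fix \<psi>
      show "dualmap sN N M f \<psi> = F \<psi>"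
      proof (cases "\<psi> \<in> dual sN N")
        case True
        have "F \<psi> m = (if m \<in> M then \<psi> (f m) else 0)" for m
          using fF[OF _ True] FD[OF True] unfolding dual_iff by auto
        then show ?thesis using True by (simp add: dualmap_def fun_eq_iff)
      next
        case False
        then show ?thesis using Fz by (simp add: dualmap_def)
      qed
    qed
    then show "F \<in> dualmap sN N M ` ?H" using fH by blast
  qed
  show ?thesis unfolding bij_betw_def using inj sub sup by blast
qed

end
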